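(* Consider a GLM with independent $Y_i$, $i=1,\ldots,n$, having densities $f_{\theta_i}(y)=\exp\{(y\theta_i-b(\theta_i))/a+c(y,a)\}$ and canonical link $\boldsymbol{\theta}=X\boldsymbol{\beta}$, where $X$ is a deterministic $n\times p$ matrix of rank $r$ any $r$ columns of which are linearly independent, and suppose Assumption (A) holds. There exist absolute constants $\tilde c\in(0,1)$ and $C_2>0$ such that the following holds. Let $1\le p_0\le r$ and assume $\widetilde{\mathcal{B}}(p_0)\subseteq\mathcal{B}(p_0)$, where $\widetilde{\mathcal{B}}(p_0)$ is defined in the context (using $\tilde c$). Then $$\inf_{\widehat{\boldsymbol{\theta}}}\sup_{\boldsymbol{\beta}\in\mathcal{B}(p_0)}\mathbb{E}\,KL(X\boldsymbol{\beta},\widehat{\boldsymbol{\theta}})\ge\begin{cases}C_2\,\frac{\mathcal{L}}{\mathcal{U}}\,\tau[2p_0]\,p_0\ln\!\big(\frac{pe}{p_0}\big), & 1\le p_0\le r/2,\\[2pt] C_2\,\frac{\mathcal{L}}{\mathcal{U}}\,\tau[p_0]\,r, & r/2\le p_0\le r,\end{cases}$$ where the infimum is over all estimators $\widehat{\boldsymbol{\theta}}$ of $\boldsymbol{\theta}$.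
   Context: Assumption (A): $\Theta\subseteq\mathbb{R}$ is a closed interval; $b$ is twice differentiable with $\sup_{t\in\mathbb{R}}b''(t)\le\mathcal{U}$ and $\inf_{t\in\Theta}b''(t)\ge\mathcal{L}$ for constants $0<\mathcal{L}\le\mathcal{U}<\infty$; $a>0$. $KL(\boldsymbol{\theta},\boldsymbol{\zeta})=\frac1a\sum_{i=1}^n\{b'(\theta_i)(\theta_i-\zeta_i)-b(\theta_i)+b(\zeta_i)\}$. $\|\boldsymbol\beta\|_0$ is the number of nonzero entries; $\mathcal{B}(p_0)=\{\boldsymbol{\beta}\in\mathbb{R}^p:\boldsymbol{\beta}^t\mathbf{x}_i\in\Theta\ \forall i,\ \|\boldsymbol{\beta}\|_0\le p_0\}$, $\mathbf{x}_i^t$ the rows of $X$. For $k\le r$: $\phi_{\min}[k]=\min_{1\le\|\boldsymbol\beta\|_0\le k}\|X\boldsymbol\beta\|^2/\|\boldsymbol\beta\|^2$, $\phi_{\max}[k]=\max_{1\le\|\boldsymbol\beta\|_0\le k}\|X\boldsymbol\beta\|^2/\|\boldsymbol\beta\|^2$, $\tau[k]=\phi_{\min}[k]/\phi_{\max}[k]$. The set $\widetilde{\mathcal{B}}(p_0)$: if $p_0\le r/2$, it is the set of $\boldsymbol\beta\in\{0,C_{p_0}\}^p$ with exactly $p_0$ entries equal to $C_{p_0}$, where $C_{p_0}^2=\frac{1}{16}\tilde c\,\frac{a}{\mathcal U}\,\phi_{\max}[2p_0]^{-1}\ln(pe/p_0)$; if $r/2\le p_0\le r$, it is the set of $\boldsymbol\beta$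 whose first $p_0$ coordinates lie in $\{0,C_{p_0}\}$ and whose remaining coordinates are $0$, where $C_{p_0}^2=\frac{\ln 2}{64}\frac{a}{\mathcal U}\phi_{\max}[p_0]^{-1}$. *)

theory Defs
  imports "HOL-Probability.Probability"
begin

text \<open>Vectors in R^p are represented as functions nat => real vanishing from index p on;
  an n x p matrix is a function nat => nat => real used on indices i < n, j < p.\<close>

definition vecs :: "nat \<Rightarrow> (nat \<Rightarrow> real) set" where
  "vecs p = {\<beta>. \<forall>j\<ge>p. \<beta> j = 0}"

definition l0 :: "nat \<Rightarrow> (nat \<Rightarrow> real) \<Rightarrow> nat" where
  "l0 p \<beta> = card {j\<in>{..<p}. \<beta> j \<noteq> 0}"

definition matvec :: "nat \<Rightarrow> (nat \<Rightarrow> nat \<Rightarrow> real) \<Rightarrow> (nat \<Rightarrow> real) \<Rightarrow> nat \<Rightarrow> real" where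
  "matvec p X \<beta> = (\<lambda>i. \<Sum>j<p. X i j * \<beta> j)"

definition sqnorm :: "nat \<Rightarrow> (nat \<Rightarrow> real) \<Rightarrow> real" where
  "sqnorm m v = (\<Sum>i<m. (v i)^2)"

definition phi_min :: "nat \<Rightarrow> nat \<Rightarrow> (nat \<Rightarrow> nat \<Rightarrow> real) \<Rightarrow> nat \<Rightarrow> real" where
  "phi_min n p X k = Inf {sqnorm n (matvec p X \<beta>) / sqnorm p \<beta> | \<beta>.
      \<beta> \<in> vecs p \<and> 1 \<le> l0 p \<beta> \<and> l0 p \<beta> \<le> k}"

definition phi_max :: "nat \<Rightarrow> nat \<Rightarrow> (nat \<Rightarrow> nat \<Rightarrow> real) \<Rightarrow> nat \<Rightarrow> real" where
  "phi_max n p X k = Sup {sqnorm n (matvec p X \<beta>) / sqnorm p \<beta> | \<beta>.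
      \<beta> \<in> vecs p \<and> 1 \<le> l0 p \<beta> \<and> l0 p \<beta> \<le> k}"

definition tau :: "nat \<Rightarrow> nat \<Rightarrow> (nat \<Rightarrow> nat \<Rightarrow> real) \<Rightarrow> nat \<Rightarrow> real" where
  "tau n p X k = phi_min n p X k / phi_max n p X k"

definition cols_indep :: "nat \<Rightarrow> (nat \<Rightarrow> nat \<Rightarrow> real) \<Rightarrow> nat set \<Rightarrow> bool" where
  "cols_indep n X J = (\<forall>w. (\<forall>i<n. (\<Sum>j\<in>J. w j * X i j) = 0) \<longrightarrow> (\<forall>j\<in>J. w j = 0))"

definition col_rank :: "nat \<Rightarrow> nat \<Rightarrow> (nat \<Rightarrow> nat \<Rightarrow> real) \<Rightarrow> nat" where
  "col_rank n p X = Max {card J | J. J \<subseteq> {..<p} \<and> cols_indep n X J}"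

definition glm_density :: "real \<Rightarrow> (real \<Rightarrow> real) \<Rightarrow> (real \<Rightarrow> real \<Rightarrow> real) \<Rightarrow> real \<Rightarrow> real \<Rightarrow> real" where
  "glm_density a b c \<theta> y = exp ((y * \<theta> - b \<theta>) / a + c y a)"

definition KL :: "real \<Rightarrow> (real \<Rightarrow> real) \<Rightarrow> (real \<Rightarrow> real) \<Rightarrow> nat \<Rightarrow> (nat \<Rightarrow> real) \<Rightarrow> (nat \<Rightarrow> real) \<Rightarrow> real" where
  "KL a b b1 n \<theta> \<zeta> = (1 / a) * (\<Sum>i<n. b1 (\<theta> i) * (\<theta> i - \<zeta> i) - b (\<theta> i) + b (\<zeta> i))"

definition B_set :: "nat \<Rightarrow> nat \<Rightarrow> (nat \<Rightarrow> nat \<Rightarrow> real) \<Rightarrow> real set \<Rightarrow> nat \<Rightarrow> (nat \<Rightarrow> real) set" where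
  "B_set n p X \<Theta> p0 = {\<beta> \<in> vecs p. (\<forall>i<n. matvec p X \<beta> i \<in> \<Theta>) \<and> l0 p \<beta> \<le> p0}"

definition Btilde1 :: "nat \<Rightarrow> real \<Rightarrow> nat \<Rightarrow> (nat \<Rightarrow> real) set" where
  "Btilde1 p C p0 = {\<beta> \<in> vecs p. (\<forall>j<p. \<beta> j \<in> {0, C}) \<and> card {j\<in>{..<p}. \<beta> j = C} = p0}"

definition Btilde2 :: "nat \<Rightarrow> real \<Rightarrow> nat \<Rightarrow> (nat \<Rightarrow> real) set" where
  "Btilde2 p C p0 = {\<beta> \<in> vecs p. (\<forall>j<p0. \<beta> j \<in> {0, C}) \<and> (\<forall>j\<ge>p0. \<beta> j = 0)}"

definition data_dist :: "nat \<Rightarrow> nat \<Rightarrow> (nat \<Rightarrow> nat \<Rightarrow> real) \<Rightarrow> real measure \<Rightarrow> real \<Rightarrow>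
    (real \<Rightarrow> real) \<Rightarrow> (real \<Rightarrow> real \<Rightarrow> real) \<Rightarrow> (nat \<Rightarrow> real) \<Rightarrow> (nat \<Rightarrow> real) measure" where
  "data_dist n p X \<mu> a b c \<beta> =
     PiM {..<n} (\<lambda>i. density \<mu> (\<lambda>y. ennreal (glm_density a b c (matvec p X \<beta> i) y)))"

definition estimators :: "nat \<Rightarrow> ((nat \<Rightarrow> real) \<Rightarrow> (nat \<Rightarrow> real)) set" where
  "estimators n = {\<theta>h. \<forall>i<n. (\<lambda>y. \<theta>h y i) \<in> borel_measurable (PiM {..<n} (\<lambda>_. borel))}"

definition risk :: "nat \<Rightarrow> nat \<Rightarrow> (nat \<Rightarrow> nat \<Rightarrow> real) \<Rightarrow> real measure \<Rightarrow> real \<Rightarrow>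
    (real \<Rightarrow> real) \<Rightarrow> (real \<Rightarrow> real) \<Rightarrow> (real \<Rightarrow> real \<Rightarrow> real) \<Rightarrow>
    ((nat \<Rightarrow> real) \<Rightarrow> (nat \<Rightarrow> real)) \<Rightarrow> (nat \<Rightarrow> real) \<Rightarrow> ennreal" where
  "risk n p X \<mu> a b b1 c \<theta>h \<beta> =
     (\<integral>\<^sup>+ y. ennreal (KL a b b1 n (matvec p X \<beta>) (\<theta>h y)) \<partial>(data_dist n p X \<mu> a b c \<beta>))"

end

theory Submission
  imports Defs
begin

lemma bregman_ge:
  fixes f f' f'' :: "real \<Rightarrow> real"
  assumes d1: "\<forall>t. (f has_real_derivative f' t) (at t)"
    and d2: "\<forall>t. (f' has_real_derivative f'' t) (at t)"
    and pos: "\<And>t. min x y \<le> t \<Longrightarrow> t \<le> max x y \<Longrightarrow> f'' t \<ge> 0"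
  shows "f y \<ge> f x + f' x * (y - x)"
proof (cases "x \<le> y")
  case True
  have mono: "f' x \<le> f' t" if "x \<le> t" "t \<le> y" for t
    using DERIV_nonneg_imp_nondecreasing[of x t f'] that d2 pos True by force
  let ?g = "\<lambda>t. f t - f' x * t"
  have "?g x \<le> ?g y"
  proof (rule DERIV_nonneg_imp_nondecreasing[OF True])
    fix t assume "x \<le> t" "t \<le> y"
    then show "\<exists>z. (?g has_real_derivative z) (at t) \<and> 0 \<le> z"
      using mono d1 by (intro exI[of _ "f' t - f' x"]) (auto intro!: derivative_eq_intros)
  qed
  then show ?thesis by (simp add: algebra_simps)
next
  case False
  have mono: "f' t \<le> f' x" if "y \<le> t" "t \<le> x" for t
    using DERIV_nonneg_imp_nondecreasing[of t x f'] that d2 pos False by force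
  let ?g = "\<lambda>t. f t - f' x * t"
  have "?g x \<le> ?g y"
  proof (rule DERIV_nonpos_imp_nonincreasing[of y x ?g])
    show "y \<le> x" using False by simp
    fix t assume "y \<le> t" "t \<le> x"
    then show "\<exists>z. (?g has_real_derivative z) (at t) \<and> z \<le> 0"
      using mono d1 by (intro exI[of _ "f' t - f' x"]) (auto intro!: derivative_eq_intros)
  qed
  then show ?thesis by (simp add: algebra_simps)
qed

locale glm =
  fixes \<Theta> :: "real set" and \<mu> :: "real measure" and a :: real
    and b b1 b2 :: "real \<Rightarrow> real" and c :: "real \<Rightarrow> real \<Rightarrow> real" and L U :: real
  assumes sets_mu: "sets \<mu> = sets borel"
    and c_meas: "(\<lambda>y. c y a) \<in> borel_measurable borel"
    and probs: "\<forall>\<theta>. prob_space (density \<mu> (\<lambda>y. ennreal (glm_density a b c \<theta> y)))"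
    and Th_int: "is_interval \<Theta>" and Th_closed: "closed \<Theta>"
    and db: "\<forall>t. (b has_real_derivative b1 t) (at t)"
    and db1: "\<forall>t. (b1 has_real_derivative b2 t) (at t)"
    and b2U: "\<forall>t. b2 t \<le> U" and b2L: "\<forall>t\<in>\<Theta>. L \<le> b2 t"
    and Lpos: "0 < L" and LU: "L \<le> U" and apos: "0 < a"
begin

abbreviation g where "g \<theta> y \<equiv> glm_density a b c \<theta> y"

lemma space_mu: "space \<mu> = UNIV"
  using sets_eq_imp_space_eq[OF sets_mu] by simp

lemma g_pos: "g \<theta> y > 0" by (simp add: glm_density_def)

lemma g_meas_borel[measurable]: "(\<lambda>y. g \<theta> y) \<in> borel_measurable borel"
  unfolding glm_density_def using c_meas by measurable

lemma g_meas[measurable]: "(\<lambda>y. g \<theta> y) \<in> borel_measurable \<mu>"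
  using g_meas_borel measurable_cong_sets[OF sets_mu refl] by blast

lemma g_int: "(\<integral>\<^sup>+ y. ennreal (g \<theta> y) \<partial>\<mu>) = 1"
proof -
  interpret prob_space "density \<mu> (\<lambda>y. ennreal (g \<theta> y))" using probs by auto
  have "1 = emeasure (density \<mu> (\<lambda>y. ennreal (g \<theta> y))) (space \<mu>)"
    using emeasure_space_1 by simp
  also have "\<dots> = (\<integral>\<^sup>+ y. ennreal (g \<theta> y) * indicator (space \<mu>) y \<partial>\<mu>)"
    by (rule emeasure_density) auto
  also have "\<dots> = (\<integral>\<^sup>+ y. ennreal (g \<theta> y) \<partial>\<mu>)"
    by (intro nn_integral_cong) (simp add: space_mu)
  finally show ?thesis by simp
qed

lemma exp_mid: "exp (((A::real) + B) / 2) \<le> (exp A + exp B) / 2"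
proof -
  have "0 \<le> (exp (A/2) - exp (B/2))^2" by simp
  moreover have "exp ((A+B)/2) = exp (A/2) * exp (B/2)" by (simp add: exp_add[symmetric] add_divide_distrib)
  moreover have "exp A = (exp (A/2))^2" "exp B = (exp (B/2))^2"
    by (simp_all add: power2_eq_square exp_add[symmetric])
  ultimately show ?thesis by (simp add: power2_eq_square algebra_simps)
qed

lemma b_mid: "b ((s + t) / 2) \<le> (b s + b t) / 2"
proof -
  define K where "K = exp ((b ((s+t)/2) - (b s + b t)/2) / a)"
  have pt: "g ((s+t)/2) y * K \<le> (g s y + g t y) / 2" for y
  proof -
    have "g ((s+t)/2) y * K = exp ((((y * s - b s)/a + c y a) + ((y * t - b t)/a + c y a)) / 2)"
      unfolding glm_density_def K_def exp_add[symmetric]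
      by (rule arg_cong[where f=exp]) (use apos in \<open>simp add: field_simps\<close>)
    also have "\<dots> \<le> (g s y + g t y) / 2" unfolding glm_density_def by (rule exp_mid)
    finally show ?thesis .
  qed
  have "ennreal K = (\<integral>\<^sup>+ y. ennreal (g ((s+t)/2) y) \<partial>\<mu>) * ennreal K" by (simp add: g_int)
  also have "\<dots> = (\<integral>\<^sup>+ y. ennreal (g ((s+t)/2) y) * ennreal K \<partial>\<mu>)"
    by (rule nn_integral_multc[symmetric]) simp
  also have "\<dots> = (\<integral>\<^sup>+ y. ennreal (g ((s+t)/2) y * K) \<partial>\<mu>)"
    by (intro nn_integral_cong) (simp add: ennreal_mult g_pos less_imp_le K_def)
  also have "\<dots> \<le> (\<integral>\<^sup>+ y. ennreal ((g s y + g t y) / 2) \<partial>\<mu>)"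
    using pt by (intro nn_integral_mono ennreal_leI) (simp add: mult.commute)
  also have "\<dots> = (\<integral>\<^sup>+ y. (ennreal (g s y) + ennreal (g t y)) * ennreal (1/2) \<partial>\<mu>)"
  proof (intro nn_integral_cong)
    fix y
    have "ennreal ((g s y + g t y) / 2) = ennreal (g s y + g t y) * ennreal (1/2)"
      by (subst ennreal_mult[symmetric]) (auto simp: g_pos less_imp_le add_pos_pos)
    also have "\<dots> = (ennreal (g s y) + ennreal (g t y)) * ennreal (1/2)"
      by (subst ennreal_plus) (auto simp: g_pos less_imp_le)
    finally show "ennreal ((g s y + g t y) / 2) = (ennreal (g s y) + ennreal (g t y)) * ennreal (1/2)" .
  qed
  also have "\<dots> = ((\<integral>\<^sup>+ y. ennreal (g s y) \<partial>\<mu>) + (\<integral>\<^sup>+ y. ennreal (g t y) \<partial>\<mu>)) * ennreal (1/2)"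
    by (subst nn_integral_multc) (auto simp: nn_integral_add)
  also have "\<dots> = ennreal 2 * ennreal (1/2)"
    by (simp add: g_int)
  also have "\<dots> = ennreal 1"
    by (subst ennreal_mult[symmetric]) auto
  finally have "K \<le> 1" by (simp add: K_def)
  then have "(b ((s+t)/2) - (b s + b t)/2) / a \<le> 0" unfolding K_def by simp
  then show ?thesis using apos by (simp add: divide_le_0_iff)
qed

end

lemma sqnorm_nonneg: "sqnorm m v \<ge> 0"
  unfolding sqnorm_def by (simp add: sum_nonneg)

definition Rset where
  "Rset n p X k = {sqnorm n (matvec p X \<beta>) / sqnorm p \<beta> | \<beta>.
      \<beta> \<in> vecs p \<and> 1 \<le> l0 p \<beta> \<and> l0 p \<beta> \<le> k}"

lemma phi_min_Rset: "phi_min n p X k = Inf (Rset n p X k)"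
  unfolding phi_min_def Rset_def by simp
lemma phi_max_Rset: "phi_max n p X k = Sup (Rset n p X k)"
  unfolding phi_max_def Rset_def by simp

lemma matvec_bound:
  "sqnorm n (matvec p X \<beta>) \<le> (\<Sum>i<n. \<Sum>j<p. (X i j)^2) * sqnorm p \<beta>"
proof -
  have "sqnorm n (matvec p X \<beta>) = (\<Sum>i<n. (\<Sum>j<p. X i j * \<beta> j)^2)"
    unfolding sqnorm_def matvec_def by simp
  also have "\<dots> \<le> (\<Sum>i<n. (\<Sum>j<p. (X i j)^2) * (\<Sum>j<p. (\<beta> j)^2))"
    by (intro sum_mono Cauchy_Schwarz_ineq_sum)
  also have "\<dots> = (\<Sum>i<n. \<Sum>j<p. (X i j)^2) * sqnorm p \<beta>"
    unfolding sqnorm_def by (simp add: sum_distrib_right)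
  finally show ?thesis .
qed

lemma l0_pos_sqnorm: assumes "1 \<le> l0 p \<beta>" shows "sqnorm p \<beta> > 0"
proof -
  have "{j\<in>{..<p}. \<beta> j \<noteq> 0} \<noteq> {}" using assms unfolding l0_def by (metis card.empty not_one_le_zero)
  then obtain j where j: "j < p" "\<beta> j \<noteq> 0" by auto
  have "0 < (\<beta> j)^2" using j by simp
  also have "\<dots> \<le> sqnorm p \<beta>" unfolding sqnorm_def
    by (rule member_le_sum) (use j in auto)
  finally show ?thesis .
qed

lemma l0_zero: assumes "l0 p \<beta> = 0" "j < p" shows "\<beta> j = 0"
  using assms unfolding l0_def by auto

lemma matvec_zero: assumes "\<forall>j<p. \<beta> j = 0" shows "matvec p X \<beta> = (\<lambda>i. 0)"
  using assms unfolding matvec_def by auto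

lemma sqnorm_zero: assumes "\<forall>i<m. v i = 0" shows "sqnorm m v = 0"
  using assms unfolding sqnorm_def by auto

lemma Rset_bdd_above: "bdd_above (Rset n p X k)"
proof
  fix x assume "x \<in> Rset n p X k"
  then obtain \<beta> where x: "x = sqnorm n (matvec p X \<beta>) / sqnorm p \<beta>" "1 \<le> l0 p \<beta>"
    unfolding Rset_def by auto
  have "sqnorm p \<beta> > 0" using l0_pos_sqnorm x by blast
  then show "x \<le> (\<Sum>i<n. \<Sum>j<p. (X i j)^2)" using matvec_bound[of n p X \<beta>]
    unfolding x by (simp add: divide_le_eq)
qed

lemma Rset_bdd_below: "bdd_below (Rset n p X k)"
  by (rule bdd_belowI[of _ 0]) (auto simp: Rset_def sqnorm_nonneg)

lemma phi_max_upper: assumes "\<beta> \<in> vecs p" "l0 p \<beta> \<le> k"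
  shows "sqnorm n (matvec p X \<beta>) \<le> phi_max n p X k * sqnorm p \<beta>"
proof (cases "l0 p \<beta> = 0")
  case True
  then have z: "\<forall>j<p. \<beta> j = 0" using l0_zero by blast
  then have "matvec p X \<beta> = (\<lambda>i. 0)" using matvec_zero by blast
  moreover have "sqnorm p \<beta> = 0" using z by (simp add: sqnorm_def)
  ultimately show ?thesis by (simp add: sqnorm_def)
next
  case False
  then have pos: "sqnorm p \<beta> > 0" using l0_pos_sqnorm by simp
  have "sqnorm n (matvec p X \<beta>) / sqnorm p \<beta> \<in> Rset n p X k"
    unfolding Rset_def using assms False by auto
  then have "sqnorm n (matvec p X \<beta>) / sqnorm p \<beta> \<le> phi_max n p X k"
    unfolding phi_max_Rset by (rule cSup_upper[OF _ Rset_bdd_above])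
  then show ?thesis using pos by (simp add: divide_le_eq)
qed

lemma phi_min_lower: assumes "\<beta> \<in> vecs p" "l0 p \<beta> \<le> k"
  shows "phi_min n p X k * sqnorm p \<beta> \<le> sqnorm n (matvec p X \<beta>)"
proof (cases "l0 p \<beta> = 0")
  case True
  then have "\<forall>j<p. \<beta> j = 0" using l0_zero by blast
  then show ?thesis by (simp add: sqnorm_def sum_nonneg)
next
  case False
  then have pos: "sqnorm p \<beta> > 0" using l0_pos_sqnorm by simp
  have "sqnorm n (matvec p X \<beta>) / sqnorm p \<beta> \<in> Rset n p X k"
    unfolding Rset_def using assms False by auto
  then have "phi_min n p X k \<le> sqnorm n (matvec p X \<beta>) / sqnorm p \<beta>"
    unfolding phi_min_Rset by (rule cInf_lower[OF _ Rset_bdd_below])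
  then show ?thesis using pos by (simp add: le_divide_eq)
qed

lemma Rset_nonempty: assumes "1 \<le> p" "1 \<le> k" shows "Rset n p X k \<noteq> {}"
proof -
  define \<beta> where "\<beta> = (\<lambda>j::nat. if j = 0 then (1::real) else 0)"
  have "{j\<in>{..<p}. \<beta> j \<noteq> 0} = {0}" using assms by (auto simp: \<beta>_def)
  then have "l0 p \<beta> = 1" by (simp add: l0_def)
  moreover have "\<beta> \<in> vecs p" using assms by (auto simp: vecs_def \<beta>_def)
  ultimately have "sqnorm n (matvec p X \<beta>) / sqnorm p \<beta> \<in> Rset n p X k"
    using assms unfolding Rset_def by force
  then show ?thesis by blast
qed

lemma phi_nonneg: assumes "1 \<le> p" "1 \<le> k"
  shows "phi_min n p X k \<ge> 0" "phi_max n p X k \<ge> 0"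
proof -
  have ne: "Rset n p X k \<noteq> {}" by (rule Rset_nonempty[OF assms])
  have nn: "\<forall>x\<in>Rset n p X k. 0 \<le> x" by (auto simp: Rset_def sqnorm_nonneg)
  show "phi_min n p X k \<ge> 0" unfolding phi_min_Rset by (rule cInf_greatest[OF ne]) (use nn in auto)
  obtain x where "x \<in> Rset n p X k" using ne by auto
  then have "x \<le> phi_max n p X k" unfolding phi_max_Rset by (rule cSup_upper[OF _ Rset_bdd_above])
  then show "phi_max n p X k \<ge> 0" using nn \<open>x \<in> _\<close> by force
qed

lemma sum_if_card: assumes "D \<subseteq> {..<(p::nat)}"
  shows "(\<Sum>j<p. if j \<in> D then (c::real) else 0) = c * card D"
proof -
  have "(\<Sum>j<p. if j \<in> D then c else 0) = sum (\<lambda>_. c) ({..<p} \<inter> D)"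
    by (rule sum.inter_restrict[symmetric]) simp
  also have "{..<p} \<inter> D = D" using assms by auto
  finally show ?thesis by simp
qed

definition bS :: "real \<Rightarrow> nat set \<Rightarrow> nat \<Rightarrow> real" where
  "bS C S = (\<lambda>j. if j \<in> S then C else 0)"

lemma bS_vecs: "S \<subseteq> {..<p} \<Longrightarrow> bS C S \<in> vecs p"
  by (auto simp: vecs_def bS_def)

lemma bS_l0: assumes "S \<subseteq> {..<p}" "C \<noteq> 0" shows "l0 p (bS C S) = card S"
proof -
  have "{j\<in>{..<p}. bS C S j \<noteq> 0} = S" using assms by (auto simp: bS_def)
  then show ?thesis by (simp add: l0_def)
qed

lemma bS_sqnorm: assumes "S \<subseteq> {..<p}" shows "sqnorm p (bS C S) = C^2 * card S"
proof -
  have "sqnorm p (bS C S) = (\<Sum>j<p. if j \<in> S then C^2 else 0)"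
    unfolding sqnorm_def bS_def by (intro sum.cong) auto
  also have "\<dots> = C^2 * card S" by (rule sum_if_card[OF assms])
  finally show ?thesis .
qed

definition bD :: "real \<Rightarrow> nat set \<Rightarrow> nat set \<Rightarrow> nat \<Rightarrow> real" where
  "bD C S S' = (\<lambda>j. bS C S j - bS C S' j)"

lemma bD_l0: assumes "S \<subseteq> {..<p}" "S' \<subseteq> {..<p}" "C \<noteq> 0"
  shows "l0 p (bD C S S') = card (sym_diff S S')"
proof -
  have "{j\<in>{..<p}. bD C S S' j \<noteq> 0} = sym_diff S S'" using assms by (auto simp: bD_def bS_def)
  then show ?thesis by (simp add: l0_def)
qed

lemma bD_vecs: "S \<subseteq> {..<p} \<Longrightarrow> S' \<subseteq> {..<p} \<Longrightarrow> bD C S S' \<in> vecs p"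
  by (auto simp: vecs_def bD_def bS_def)

lemma bD_sqnorm: assumes "S \<subseteq> {..<p}" "S' \<subseteq> {..<p}"
  shows "sqnorm p (bD C S S') = C^2 * card (sym_diff S S')"
proof -
  have "sqnorm p (bD C S S') = (\<Sum>j<p. if j \<in> sym_diff S S' then C^2 else 0)"
    unfolding sqnorm_def bD_def bS_def by (intro sum.cong) auto
  also have "\<dots> = C^2 * card (sym_diff S S')" by (rule sum_if_card) (use assms in auto)
  finally show ?thesis .
qed

lemma matvec_diff: "matvec p X (\<lambda>j. u j - v j) i = matvec p X u i - matvec p X v i"
  unfolding matvec_def by (simp add: algebra_simps sum_subtractf)

context glm begin

lemma b2_nonneg: "b2 t0 \<ge> 0"
proof (rule ccontr)
  assume "\<not> 0 \<le> b2 t0"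
  then have neg: "b2 t0 < 0" by simp
  obtain d1 where d1: "d1 > 0" "\<forall>h>0. h < d1 \<longrightarrow> b1 t0 < b1 (t0 - h)"
    using DERIV_neg_dec_left[OF db1[rule_format] neg] by blast
  obtain d2 where d2: "d2 > 0" "\<forall>h>0. h < d2 \<longrightarrow> b1 t0 > b1 (t0 + h)"
    using DERIV_neg_dec_right[OF db1[rule_format] neg] by blast
  define h where "h = min d1 d2 / 2"
  have h: "h > 0" "h < d1" "h < d2" using d1 d2 by (auto simp: h_def)
  obtain z where z: "t0 < z" "z < t0 + h" "b (t0 + h) - b t0 = (t0 + h - t0) * b1 z"
    using MVT2[of t0 "t0+h" b b1] h db by auto
  obtain z' where z': "t0 - h < z'" "z' < t0" "b t0 - b (t0 - h) = (t0 - (t0 - h)) * b1 z'"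
    using MVT2[of "t0-h" t0 b b1] h db by auto
  have "b1 z < b1 t0" using d2(2)[rule_format, of "z - t0"] z h by auto
  moreover have "b1 t0 < b1 z'" using d1(2)[rule_format, of "t0 - z'"] z' h by auto
  ultimately have "b1 z < b1 z'" by linarith
  then have "h * b1 z < h * b1 z'" using h(1) by (intro mult_strict_left_mono) auto
  moreover have "b (t0+h) + b (t0-h) - 2 * b t0 = h * b1 z - h * b1 z'"
    using z(3) z'(3) by simp
  ultimately have "b (t0+h) + b (t0-h) - 2 * b t0 < 0" by linarith
  moreover have "b t0 \<le> (b (t0+h) + b (t0-h)) / 2" using b_mid[of "t0+h" "t0-h"] by simp
  ultimately show False by simp
qed

lemma b1_mono: "x \<le> y \<Longrightarrow> b1 x \<le> b1 y"
  using DERIV_nonneg_imp_nondecreasing[of x y b1] db1 b2_nonneg by blast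

lemma D_convex: "b y \<ge> b x + b1 x * (y - x)"
  by (rule bregman_ge[OF db db1]) (simp add: b2_nonneg)

lemma D_upper: "b y - b x - b1 x * (y - x) \<le> U / 2 * (y - x)^2"
proof -
  have "(\<lambda>t. U/2 * t^2 - b t) y \<ge> (\<lambda>t. U/2 * t^2 - b t) x + (\<lambda>t. U * t - b1 t) x * (y - x)"
  proof (rule bregman_ge[where f'' = "\<lambda>t. U - b2 t"])
    show "\<forall>t. ((\<lambda>t. U/2 * t^2 - b t) has_real_derivative U * t - b1 t) (at t)"
      using db by (auto intro!: derivative_eq_intros)
    show "\<forall>t. ((\<lambda>t. U * t - b1 t) has_real_derivative U - b2 t) (at t)"
      using db1 by (auto intro!: derivative_eq_intros)
  qed (use b2U in auto)
  then show ?thesis by (simp add: power2_eq_square algebra_simps)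
qed

lemma D_lower: assumes "x \<in> \<Theta>" "y \<in> \<Theta>"
  shows "b y - b x - b1 x * (y - x) \<ge> L / 2 * (y - x)^2"
proof -
  have seg: "t \<in> \<Theta>" if "min x y \<le> t" "t \<le> max x y" for t
  proof (cases "x \<le> y")
    case True then show ?thesis using that
      by (intro mem_is_interval_1_I[OF Th_int assms(1) assms(2)]) (auto simp: min_def max_def)
  next
    case False then show ?thesis using that
      by (intro mem_is_interval_1_I[OF Th_int assms(2) assms(1)]) (auto simp: min_def max_def)
  qed
  have "(\<lambda>t. b t - L/2 * t^2) y \<ge> (\<lambda>t. b t - L/2 * t^2) x + (\<lambda>t. b1 t - L * t) x * (y - x)"
  proof (rule bregman_ge[where f'' = "\<lambda>t. b2 t - L"])
    show "\<forall>t. ((\<lambda>t. b t - L/2 * t^2) has_real_derivative b1 t - L * t) (at t)"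
      using db by (auto intro!: derivative_eq_intros)
    show "\<forall>t. ((\<lambda>t. b1 t - L * t) has_real_derivative b2 t - L) (at t)"
      using db1 by (auto intro!: derivative_eq_intros)
  qed (use b2L seg in auto)
  then show ?thesis by (simp add: power2_eq_square algebra_simps)
qed

lemma D_proj: assumes x: "x \<in> \<Theta>"
  shows "b y - b x - b1 x * (y - x) \<ge> L / 2 * (closest_point \<Theta> y - x)^2"
proof -
  define z where "z = closest_point \<Theta> y"
  have ne: "\<Theta> \<noteq> {}" using x by auto
  have zT: "z \<in> \<Theta>" unfolding z_def by (rule closest_point_in_set[OF Th_closed ne])
  have zmin: "\<forall>w\<in>\<Theta>. dist y z \<le> dist y w"
    unfolding z_def using closest_point_exists(2)[OF Th_closed ne] by blast
  have btw: "(x \<le> z \<and> z \<le> y) \<or> (y \<le> z \<and> z \<le> x)"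
  proof -
    have yT: "y \<in> \<Theta>" if "min x z \<le> y" "y \<le> max x z"
    proof (cases "x \<le> z")
      case True then show ?thesis using that
        by (intro mem_is_interval_1_I[OF Th_int x zT]) (auto simp: min_def max_def)
    next
      case False then show ?thesis using that
        by (intro mem_is_interval_1_I[OF Th_int zT x]) (auto simp: min_def max_def)
    qed
    have "dist y z \<le> dist y x" using zmin x by auto
    then show ?thesis
    proof (cases "min x z \<le> y \<and> y \<le> max x z")
      case True
      then have "y \<in> \<Theta>" using yT by blast
      then have "dist y z \<le> 0" using zmin by (metis dist_self)
      then have "z = y" by simp
      then show ?thesis by auto
    next
      case False
      then show ?thesis using \<open>dist y z \<le> dist y x\<close> unfolding dist_real_def min_def max_def
        by (smt (verit))
    qed
  qed
  have "b y - b x - b1 x * (y - x) \<ge> b z - b x - b1 x * (z - x)"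
  proof -
    have "b y \<ge> b z + b1 z * (y - z)" by (rule D_convex)
    moreover have "(b1 z - b1 x) * (y - z) \<ge> 0"
      using btw
    proof
      assume h: "x \<le> z \<and> z \<le> y"
      then show ?thesis using b1_mono[of x z] by (intro mult_nonneg_nonneg) auto
    next
      assume h: "y \<le> z \<and> z \<le> x"
      then show ?thesis using b1_mono[of z x] by (intro mult_nonpos_nonpos) auto
    qed
    ultimately show ?thesis by (simp add: algebra_simps)
  qed
  moreover have "b z - b x - b1 x * (z - x) \<ge> L / 2 * (z - x)^2" by (rule D_lower[OF x zT])
  ultimately show ?thesis unfolding z_def by simp
qed

end

definition fprod :: "real \<Rightarrow> (real\<Rightarrow>real) \<Rightarrow> (real\<Rightarrow>real\<Rightarrow>real) \<Rightarrow> nat \<Rightarrow> (nat\<Rightarrow>real) \<Rightarrow> (nat\<Rightarrow>real) \<Rightarrow> real"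
  where "fprod a b c n \<theta> y = (\<Prod>i<n. glm_density a b c (\<theta> i) (y i))"

context glm begin

abbreviation F where "F n \<theta> y \<equiv> fprod a b c n \<theta> y"

lemma F_pos: "F n \<theta> y > 0"
  unfolding fprod_def by (intro prod_pos) (simp add: g_pos)

lemma mu_sf: "sigma_finite_measure \<mu>"
proof
  define B where "B k = {y. g 0 y > 1 / real (Suc k)}" for k
  have Bs: "B k \<in> sets \<mu>" for k
  proof -
    have "B k = {y \<in> space \<mu>. g 0 y > 1 / real (Suc k)}" by (simp add: B_def space_mu)
    also have "\<dots> \<in> sets \<mu>" by measurable
    finally show ?thesis .
  qed
  have fin: "emeasure \<mu> (B k) \<noteq> \<infinity>" for k
  proof -
    have "emeasure \<mu> (B k) = (\<integral>\<^sup>+ y. indicator (B k) y \<partial>\<mu>)" using Bs by simp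
    also have "\<dots> \<le> (\<integral>\<^sup>+ y. ennreal (real (Suc k)) * ennreal (g 0 y) \<partial>\<mu>)"
    proof (intro nn_integral_mono)
      fix y
      show "indicator (B k) y \<le> ennreal (real (Suc k)) * ennreal (g 0 y)"
      proof (cases "y \<in> B k")
        case True
        then have "1 < real (Suc k) * g 0 y" unfolding B_def
          by (simp add: field_simps del: of_nat_Suc)
        then have "ennreal 1 \<le> ennreal (real (Suc k) * g 0 y)" by (intro ennreal_leI) simp
        then show ?thesis using True by (simp add: ennreal_mult g_pos less_imp_le del: of_nat_Suc)
      qed simp
    qed
    also have "\<dots> = ennreal (real (Suc k)) * (\<integral>\<^sup>+ y. ennreal (g 0 y) \<partial>\<mu>)"
      by (rule nn_integral_cmult) simp
    also have "\<dots> < \<infinity>" by (simp add: g_int)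
    finally show ?thesis by simp
  qed
  have cov: "(\<Union>k. B k) = space \<mu>"
  proof -
    have "\<exists>k. y \<in> B k" for y
    proof -
      obtain k where "inverse (real (Suc k)) < g 0 y" using reals_Archimedean g_pos by blast
      then show ?thesis by (auto simp: B_def field_simps)
    qed
    then show ?thesis by (auto simp: space_mu)
  qed
  show "\<exists>A. countable A \<and> A \<subseteq> sets \<mu> \<and> \<Union> A = space \<mu> \<and> (\<forall>a\<in>A. emeasure \<mu> a \<noteq> \<infinity>)"
    by (intro exI[of _ "range B"]) (use Bs fin cov in auto)
qed

lemma dens_sf: "sigma_finite_measure (density \<mu> (\<lambda>y. ennreal (g \<theta> y)))"
proof -
  interpret prob_space "density \<mu> (\<lambda>y. ennreal (g \<theta> y))" using probs by auto
  show ?thesis by unfold_locales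
qed

lemma sets_nu: "sets (PiM {..<n} (\<lambda>_. \<mu>)) = sets (PiM {..<n} (\<lambda>_. borel))"
  by (rule sets_PiM_cong) (auto simp: sets_mu)

lemma F_meas[measurable]: "(\<lambda>y. F n \<theta> y) \<in> borel_measurable (PiM {..<n} (\<lambda>_. \<mu>))"
  unfolding fprod_def by measurable

lemma PiM_dens:
  "PiM {..<n} (\<lambda>i. density \<mu> (\<lambda>y. ennreal (g (\<theta> i) y)))
     = density (PiM {..<n} (\<lambda>_. \<mu>)) (\<lambda>y. ennreal (F n \<theta> y))"
proof -
  interpret M: product_sigma_finite "\<lambda>i. density \<mu> (\<lambda>y. ennreal (g (\<theta> i) y))"
    unfolding product_sigma_finite_def using dens_sf by simp
  interpret N: product_sigma_finite "\<lambda>_::nat. \<mu>"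
    unfolding product_sigma_finite_def using mu_sf by simp
  have "density (PiM {..<n} (\<lambda>_. \<mu>)) (\<lambda>y. ennreal (F n \<theta> y))
     = PiM {..<n} (\<lambda>i. density \<mu> (\<lambda>y. ennreal (g (\<theta> i) y)))"
  proof (rule M.PiM_eqI)
    show "sets (density (PiM {..<n} (\<lambda>_. \<mu>)) (\<lambda>y. ennreal (F n \<theta> y)))
       = sets (PiM {..<n} (\<lambda>i. density \<mu> (\<lambda>y. ennreal (g (\<theta> i) y))))"
      unfolding sets_density by (rule sets_PiM_cong) simp_all
  next
    fix A assume A: "\<And>i. i \<in> {..<n} \<Longrightarrow> A i \<in> sets (density \<mu> (\<lambda>y. ennreal (g (\<theta> i) y)))"
    then have A': "\<And>i. i \<in> {..<n} \<Longrightarrow> A i \<in> sets \<mu>" by simp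
    have PA: "PiE {..<n} A \<in> sets (PiM {..<n} (\<lambda>_. \<mu>))"
      by (rule sets_PiM_I_finite) (use A' in auto)
    have "emeasure (density (PiM {..<n} (\<lambda>_. \<mu>)) (\<lambda>y. ennreal (F n \<theta> y))) (PiE {..<n} A)
        = (\<integral>\<^sup>+ y. ennreal (F n \<theta> y) * indicator (PiE {..<n} A) y \<partial>PiM {..<n} (\<lambda>_. \<mu>))"
      by (rule emeasure_density[OF _ PA]) simp
    also have "\<dots> = (\<integral>\<^sup>+ y. (\<Prod>i<n. ennreal (g (\<theta> i) (y i)) * indicator (A i) (y i)) \<partial>PiM {..<n} (\<lambda>_. \<mu>))"
    proof (intro nn_integral_cong)
      fix y assume y: "y \<in> space (PiM {..<n} (\<lambda>_. \<mu>))"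
      then have ext: "y \<in> extensional {..<n}" by (simp add: space_PiM PiE_def)
      have "indicator (PiE {..<n} A) y = (\<Prod>i<n. indicator (A i) (y i) :: ennreal)"
      proof (cases "\<forall>i<n. y i \<in> A i")
        case True
        then have "y \<in> PiE {..<n} A" using ext by (auto simp: PiE_def Pi_def)
        then show ?thesis using True by simp
      next
        case False
        then obtain i where i: "i < n" "y i \<notin> A i" by auto
        then have "y \<notin> PiE {..<n} A" by auto
        moreover have "(\<Prod>i<n. indicator (A i) (y i) :: ennreal) = 0"
          using i by (intro prod_zero bexI[of _ i]) auto
        ultimately show ?thesis by simp
      qed
      moreover have "ennreal (F n \<theta> y) = (\<Prod>i<n. ennreal (g (\<theta> i) (y i)))"
        unfolding fprod_def by (rule prod_ennreal[symmetric]) (simp add: g_pos less_imp_le)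
      ultimately show "ennreal (F n \<theta> y) * indicator (PiE {..<n} A) y
          = (\<Prod>i<n. ennreal (g (\<theta> i) (y i)) * indicator (A i) (y i))"
        by (simp add: prod.distrib)
    qed
    also have "\<dots> = (\<Prod>i<n. \<integral>\<^sup>+ x. ennreal (g (\<theta> i) x) * indicator (A i) x \<partial>\<mu>)"
    proof (rule N.product_nn_integral_prod)
      fix i assume "i \<in> {..<n}"
      then have [measurable]: "A i \<in> sets \<mu>" using A' by auto
      show "(\<lambda>x. ennreal (g (\<theta> i) x) * indicator (A i) x) \<in> borel_measurable \<mu>" by measurable
    qed simp
    also have "\<dots> = (\<Prod>i<n. emeasure (density \<mu> (\<lambda>y. ennreal (g (\<theta> i) y))) (A i))"
      by (intro prod.cong refl emeasure_density[symmetric]) (use A' in auto)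
    finally show "emeasure (density (PiM {..<n} (\<lambda>_. \<mu>)) (\<lambda>y. ennreal (F n \<theta> y))) (PiE {..<n} A)
        = (\<Prod>i<n. emeasure (density \<mu> (\<lambda>y. ennreal (g (\<theta> i) y))) (A i))" .
  qed (rule finite_lessThan)
  then show ?thesis by simp
qed

lemma F_int: "(\<integral>\<^sup>+ y. ennreal (F n \<theta> y) \<partial>PiM {..<n} (\<lambda>_. \<mu>)) = 1"
proof -
  interpret N: product_sigma_finite "\<lambda>_::nat. \<mu>"
    unfolding product_sigma_finite_def using mu_sf by simp
  have "(\<integral>\<^sup>+ y. ennreal (F n \<theta> y) \<partial>PiM {..<n} (\<lambda>_. \<mu>))
      = (\<integral>\<^sup>+ y. (\<Prod>i<n. ennreal (g (\<theta> i) (y i))) \<partial>PiM {..<n} (\<lambda>_. \<mu>))"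
    unfolding fprod_def by (intro nn_integral_cong prod_ennreal[symmetric]) (simp add: g_pos less_imp_le)
  also have "\<dots> = (\<Prod>i<n. \<integral>\<^sup>+ x. ennreal (g (\<theta> i) x) \<partial>\<mu>)"
    by (rule N.product_nn_integral_prod) (simp, measurable)
  finally show ?thesis by (simp add: g_int)
qed

lemma g_sq: "g t y ^ 2 / g 0 y = g (2 * t) y * exp ((b (2*t) - 2 * b t + b 0) / a)"
  unfolding glm_density_def
  by (simp add: power2_eq_square exp_add[symmetric] exp_diff[symmetric]) (use apos in \<open>simp add: field_simps\<close>)

lemma chi2:
  "(\<integral>\<^sup>+ y. ennreal (F n \<theta> y ^ 2 / F n (\<lambda>_. 0) y) \<partial>PiM {..<n} (\<lambda>_. \<mu>))
     = ennreal (\<Prod>i<n. exp ((b (2 * \<theta> i) - 2 * b (\<theta> i) + b 0) / a))"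
proof -
  interpret N: product_sigma_finite "\<lambda>_::nat. \<mu>"
    unfolding product_sigma_finite_def using mu_sf by simp
  have "(\<integral>\<^sup>+ y. ennreal (F n \<theta> y ^ 2 / F n (\<lambda>_. 0) y) \<partial>PiM {..<n} (\<lambda>_. \<mu>))
      = (\<integral>\<^sup>+ y. (\<Prod>i<n. ennreal (g (\<theta> i) (y i) ^ 2 / g 0 (y i))) \<partial>PiM {..<n} (\<lambda>_. \<mu>))"
  proof (intro nn_integral_cong)
    fix y
    have "F n \<theta> y ^ 2 / F n (\<lambda>_. 0) y = (\<Prod>i<n. g (\<theta> i) (y i) ^ 2 / g 0 (y i))"
      unfolding fprod_def by (simp add: prod_power_distrib prod_dividef)
    then show "ennreal (F n \<theta> y ^ 2 / F n (\<lambda>_. 0) y) = (\<Prod>i<n. ennreal (g (\<theta> i) (y i) ^ 2 / g 0 (y i)))"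
      by (simp add: prod_ennreal g_pos less_imp_le)
  qed
  also have "\<dots> = (\<Prod>i<n. \<integral>\<^sup>+ x. ennreal (g (\<theta> i) x ^ 2 / g 0 x) \<partial>\<mu>)"
    by (rule N.product_nn_integral_prod) (simp, measurable)
  also have "\<dots> = (\<Prod>i<n. ennreal (exp ((b (2 * \<theta> i) - 2 * b (\<theta> i) + b 0) / a)))"
  proof (intro prod.cong refl)
    fix i
    have "(\<integral>\<^sup>+ x. ennreal (g (\<theta> i) x ^ 2 / g 0 x) \<partial>\<mu>)
        = (\<integral>\<^sup>+ x. ennreal (g (2 * \<theta> i) x) * ennreal (exp ((b (2 * \<theta> i) - 2 * b (\<theta> i) + b 0) / a)) \<partial>\<mu>)"
      by (intro nn_integral_cong) (simp add: g_sq ennreal_mult g_pos less_imp_le)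
    also have "\<dots> = ennreal (exp ((b (2 * \<theta> i) - 2 * b (\<theta> i) + b 0) / a))"
      by (subst nn_integral_multc) (auto simp: g_int)
    finally show "(\<integral>\<^sup>+ x. ennreal (g (\<theta> i) x ^ 2 / g 0 x) \<partial>\<mu>)
        = ennreal (exp ((b (2 * \<theta> i) - 2 * b (\<theta> i) + b 0) / a))" .
  qed
  also have "\<dots> = ennreal (\<Prod>i<n. exp ((b (2 * \<theta> i) - 2 * b (\<theta> i) + b 0) / a))"
    by (rule prod_ennreal) simp
  finally show ?thesis .
qed

lemma chi2_bound: "(\<Prod>i<(n::nat). exp ((b (2 * \<theta> i) - 2 * b (\<theta> i) + b 0) / a))
    \<le> exp (U / a * (\<Sum>i<n. (\<theta> i)^2))"
proof -
  have "(\<Prod>i<n. exp ((b (2 * \<theta> i) - 2 * b (\<theta> i) + b 0) / a))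
      = exp (\<Sum>i<n. (b (2 * \<theta> i) - 2 * b (\<theta> i) + b 0) / a)"
    by (subst exp_sum) simp_all
  also have "\<dots> \<le> exp (\<Sum>i<n. U / a * (\<theta> i)^2)"
  proof (intro exp_le_cancel_iff[THEN iffD2] sum_mono)
    fix i
    have u1: "b (2 * \<theta> i) - b (\<theta> i) - b1 (\<theta> i) * (2 * \<theta> i - \<theta> i) \<le> U/2 * (2 * \<theta> i - \<theta> i)^2"
      by (rule D_upper)
    have u2: "b 0 - b (\<theta> i) - b1 (\<theta> i) * (0 - \<theta> i) \<le> U/2 * (0 - \<theta> i)^2"
      by (rule D_upper)
    have "b (2 * \<theta> i) - 2 * b (\<theta> i) + b 0 \<le> U * (\<theta> i)^2"
      using u1 u2 by (simp add: power2_eq_square algebra_simps)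
    then show "(b (2 * \<theta> i) - 2 * b (\<theta> i) + b 0) / a \<le> U / a * (\<theta> i)^2"
    proof -
      have "(b (2 * \<theta> i) - 2 * b (\<theta> i) + b 0) / a \<le> (U * (\<theta> i)^2) / a"
        by (rule divide_right_mono) (use \<open>b (2 * \<theta> i) - 2 * b (\<theta> i) + b 0 \<le> U * (\<theta> i)^2\<close> apos in auto)
      then show ?thesis by simp
    qed
  qed
  also have "\<dots> = exp (U / a * (\<Sum>i<n. (\<theta> i)^2))" by (simp add: sum_distrib_left)
  finally show ?thesis .
qed

end

lemma amgm_ineq:
  fixes f g t :: real
  assumes "f \<ge> 0" "g > 0" "t > 0"
  shows "f \<le> t / 2 * (f^2 / g) + 1 / (2 * t) * g"
proof -
  have "0 \<le> (t * f - g)^2" by simp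
  then have "2 * t * f * g \<le> t^2 * f^2 + g^2" by (simp add: power2_eq_square algebra_simps)
  then have "f \<le> (t^2 * f^2 + g^2) / (2 * t * g)"
    using assms by (simp add: le_divide_eq mult.commute mult.left_commute)
  also have "\<dots> = t / 2 * (f^2 / g) + 1 / (2 * t) * g"
    using assms by (simp add: field_simps power2_eq_square)
  finally show ?thesis .
qed

lemma sqrt_avg: assumes "H > 0" "x \<ge> 0" shows "H * sqrt (x / H) = sqrt (H * x)"
proof -
  have "sqrt (H * x) = sqrt (H^2 * (x / H))" using assms by (simp add: power2_eq_square)
  also have "\<dots> = sqrt (H^2) * sqrt (x / H)" by (rule real_sqrt_mult)
  also have "\<dots> = H * sqrt (x / H)" using assms by simp
  finally show ?thesis by simp
qed

lemma minimax_core: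
  fixes \<nu> :: "'x measure" and f :: "'h \<Rightarrow> 'x \<Rightarrow> real" and g0 :: "'x \<Rightarrow> real"
    and ll :: "'h \<Rightarrow> 'x \<Rightarrow> real" and H :: "'h set" and E N \<delta> :: real
  assumes H: "finite H" "H \<noteq> {}"
    and fm[measurable]: "\<And>S. S \<in> H \<Longrightarrow> f S \<in> borel_measurable \<nu>"
    and gm[measurable]: "g0 \<in> borel_measurable \<nu>"
    and lm[measurable]: "\<And>S. S \<in> H \<Longrightarrow> ll S \<in> borel_measurable \<nu>"
    and fpos: "\<And>S x. S \<in> H \<Longrightarrow> x \<in> space \<nu> \<Longrightarrow> f S x \<ge> 0"
    and gpos: "\<And>x. x \<in> space \<nu> \<Longrightarrow> g0 x > 0"
    and fint: "\<And>S. S \<in> H \<Longrightarrow> (\<integral>\<^sup>+ x. ennreal (f S x) \<partial>\<nu>) = 1"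
    and gint: "(\<integral>\<^sup>+ x. ennreal (g0 x) \<partial>\<nu>) = 1"
    and chi: "\<And>S. S \<in> H \<Longrightarrow> (\<integral>\<^sup>+ x. ennreal (f S x ^ 2 / g0 x) \<partial>\<nu>) \<le> ennreal E"
    and cnt: "\<And>x. x \<in> space \<nu> \<Longrightarrow> real (card {S \<in> H. ll S x < \<delta>}) \<le> N"
    and E: "E > 0" and N: "N > 0" and \<delta>: "\<delta> \<ge> 0"
  shows "\<exists>S\<in>H. (\<integral>\<^sup>+ x. ennreal (f S x) * ennreal (ll S x) \<partial>\<nu>)
            \<ge> ennreal (\<delta> * (1 - sqrt (N * E / card H)))"
proof -
  define A where "A S = {x \<in> space \<nu>. ll S x < \<delta>}" for S
  have A[measurable]: "S \<in> H \<Longrightarrow> A S \<in> sets \<nu>" for S unfolding A_def by measurable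
  define q where "q S = (\<integral>\<^sup>+ x. ennreal (f S x) * indicator (A S) x \<partial>\<nu>)" for S
  define r where "r S = (\<integral>\<^sup>+ x. ennreal (g0 x) * indicator (A S) x \<partial>\<nu>)" for S
  define hc where "hc = real (card H)"
  have hc: "hc > 0" using H by (simp add: hc_def card_gt_0_iff)
  define t where "t = sqrt (N / (hc * E))"
  have t: "t > 0" using hc E N by (simp add: t_def)
  have qS: "q S \<le> ennreal (t / 2 * E) + ennreal (1 / (2 * t)) * r S" if S: "S \<in> H" for S
  proof -
    have "q S \<le> (\<integral>\<^sup>+ x. ennreal (t / 2) * ennreal (f S x ^ 2 / g0 x)
                   + ennreal (1 / (2 * t)) * (ennreal (g0 x) * indicator (A S) x) \<partial>\<nu>)"
      unfolding q_def
    proof (intro nn_integral_mono)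
      fix x assume x: "x \<in> space \<nu>"
      show "ennreal (f S x) * indicator (A S) x \<le> ennreal (t / 2) * ennreal (f S x ^ 2 / g0 x)
                   + ennreal (1 / (2 * t)) * (ennreal (g0 x) * indicator (A S) x)"
      proof (cases "x \<in> A S")
        case True
        have "f S x \<le> t / 2 * (f S x ^ 2 / g0 x) + 1 / (2 * t) * g0 x"
          by (rule amgm_ineq) (use fpos[OF S x] gpos[OF x] t in auto)
        then have "ennreal (f S x) \<le> ennreal (t / 2 * (f S x ^ 2 / g0 x) + 1 / (2 * t) * g0 x)"
          by (rule ennreal_leI)
        also have "\<dots> = ennreal (t / 2 * (f S x ^ 2 / g0 x)) + ennreal (1 / (2 * t) * g0 x)"
          using t gpos[OF x] by (intro ennreal_plus) auto
        also have "\<dots> = ennreal (t / 2) * ennreal (f S x ^ 2 / g0 x) + ennreal (1 / (2 * t)) * ennreal (g0 x)"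
        proof -
          have n1: "0 \<le> t / 2" "0 \<le> f S x ^ 2 / g0 x" "0 \<le> 1 / (2 * t)" "0 \<le> g0 x"
            using t gpos[OF x] by auto
          show ?thesis by (simp only: ennreal_mult n1)
        qed
        finally show ?thesis using True by simp
      qed simp
    qed
    also have "\<dots> = ennreal (t / 2) * (\<integral>\<^sup>+ x. ennreal (f S x ^ 2 / g0 x) \<partial>\<nu>)
                   + ennreal (1 / (2 * t)) * r S"
      unfolding r_def using S by (simp add: nn_integral_add nn_integral_cmult)
    also have "\<dots> \<le> ennreal (t / 2) * ennreal E + ennreal (1 / (2 * t)) * r S"
      by (intro add_mono mult_left_mono chi[OF S]) auto
    also have "ennreal (t / 2) * ennreal E = ennreal (t / 2 * E)"
      using t E by (subst ennreal_mult[symmetric]) auto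
    finally show ?thesis .
  qed
  have rsum: "(\<Sum>S\<in>H. r S) \<le> ennreal N"
  proof -
    have "(\<Sum>S\<in>H. r S) = (\<integral>\<^sup>+ x. (\<Sum>S\<in>H. ennreal (g0 x) * indicator (A S) x) \<partial>\<nu>)"
      unfolding r_def by (rule nn_integral_sum[symmetric]) auto
    also have "\<dots> \<le> (\<integral>\<^sup>+ x. ennreal N * ennreal (g0 x) \<partial>\<nu>)"
    proof (intro nn_integral_mono)
      fix x assume x: "x \<in> space \<nu>"
      have e1: "(\<Sum>S\<in>H. ennreal (g0 x) * indicator (A S) x) = ennreal (g0 x) * (\<Sum>S\<in>H. indicator (A S) x)"
        by (simp add: sum_distrib_left)
      have e2: "(\<Sum>S\<in>H. indicator (A S) x :: ennreal) = of_nat (card {S \<in> H. ll S x < \<delta>})"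
      proof -
        have "(\<Sum>S\<in>H. indicator (A S) x :: ennreal) = (\<Sum>S\<in>H. if ll S x < \<delta> then 1 else 0)"
          using x by (intro sum.cong) (auto simp: A_def)
        also have "\<dots> = of_nat (card {S \<in> H. ll S x < \<delta>})"
          using H by (simp add: sum.If_cases Int_def)
        finally show ?thesis .
      qed
      have e3: "(of_nat (card {S \<in> H. ll S x < \<delta>}) :: ennreal) \<le> ennreal N"
        using cnt[OF x] by (simp add: ennreal_of_nat_eq_real_of_nat ennreal_leI)
      have "ennreal (g0 x) * of_nat (card {S \<in> H. ll S x < \<delta>}) \<le> ennreal (g0 x) * ennreal N"
        using e3 by (rule mult_left_mono) simp
      then show "(\<Sum>S\<in>H. ennreal (g0 x) * indicator (A S) x) \<le> ennreal N * ennreal (g0 x)"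
        unfolding e1 e2 by (simp add: mult.commute)
    qed
    also have "\<dots> = ennreal N" by (simp add: nn_integral_cmult gint)
    finally show ?thesis .
  qed
  have qsum: "(\<Sum>S\<in>H. q S) \<le> ennreal (sqrt (hc * N * E))"
  proof -
    have "(\<Sum>S\<in>H. q S) \<le> (\<Sum>S\<in>H. ennreal (t / 2 * E) + ennreal (1 / (2 * t)) * r S)"
      by (intro sum_mono qS)
    also have "\<dots> = (\<Sum>S\<in>H. ennreal (t / 2 * E)) + ennreal (1 / (2 * t)) * (\<Sum>S\<in>H. r S)"
      by (simp add: sum.distrib sum_distrib_left)
    also have "\<dots> = ennreal (hc * (t / 2 * E)) + ennreal (1 / (2 * t)) * (\<Sum>S\<in>H. r S)"
    proof -
      have "(\<Sum>S\<in>H. ennreal (t / 2 * E)) = ennreal (hc * (t / 2 * E))"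
        using t E by (subst sum_ennreal) (auto simp: hc_def)
      then show ?thesis by simp
    qed
    also have "\<dots> \<le> ennreal (hc * (t / 2 * E)) + ennreal (1 / (2 * t)) * ennreal N"
      by (intro add_mono mult_left_mono rsum) auto
    also have "\<dots> = ennreal (hc * (t / 2 * E) + 1 / (2 * t) * N)"
    proof -
      have n: "0 \<le> hc * (t / 2 * E)" "0 \<le> 1 / (2 * t)" "0 \<le> N" "0 \<le> 1 / (2 * t) * N"
        using t E N hc by auto
      have "ennreal (1 / (2 * t)) * ennreal N = ennreal (1 / (2 * t) * N)"
        by (rule ennreal_mult[symmetric]) (use n in auto)
      moreover have "ennreal (hc * (t / 2 * E)) + ennreal (1 / (2 * t) * N) = ennreal (hc * (t / 2 * E) + 1 / (2 * t) * N)"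
        by (rule ennreal_plus[symmetric]) (use n in auto)
      ultimately show ?thesis by simp
    qed
    also have "hc * (t / 2 * E) + 1 / (2 * t) * N = sqrt (hc * N * E)"
    proof -
      have tt: "t * t = N / (hc * E)" using hc E N by (simp add: t_def)
      have "hc * (t / 2 * E) = sqrt (hc * N * E) / 2"
      proof -
        have "(hc * t * E)^2 = hc * N * E" using tt hc E by (simp add: power2_eq_square field_simps)
        then have "hc * t * E = sqrt (hc * N * E)"
          using hc E t by (metis less_imp_le real_sqrt_unique mult_nonneg_nonneg)
        then show ?thesis by simp
      qed
      moreover have "1 / (2 * t) * N = sqrt (hc * N * E) / 2"
      proof -
        have "(N / t)^2 = hc * N * E" using tt hc E N t by (simp add: power2_eq_square field_simps)
        then have "N / t = sqrt (hc * N * E)"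
          using N t by (metis less_imp_le real_sqrt_unique divide_nonneg_nonneg)
        then show ?thesis by simp
      qed
      ultimately show ?thesis by simp
    qed
    finally show ?thesis .
  qed
  define R where "R S = (\<integral>\<^sup>+ x. ennreal (f S x) * ennreal (ll S x) \<partial>\<nu>)" for S
  have step2: "ennreal \<delta> \<le> ennreal \<delta> * q S + R S" if S: "S \<in> H" for S
  proof -
    have "ennreal \<delta> = ennreal \<delta> * (\<integral>\<^sup>+ x. ennreal (f S x) \<partial>\<nu>)" using fint[OF S] by simp
    also have "\<dots> = (\<integral>\<^sup>+ x. ennreal \<delta> * ennreal (f S x) \<partial>\<nu>)"
      using S by (simp add: nn_integral_cmult)
    also have "\<dots> \<le> (\<integral>\<^sup>+ x. ennreal \<delta> * (ennreal (f S x) * indicator (A S) x) + ennreal (f S x) * ennreal (ll S x) \<partial>\<nu>)"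
    proof (intro nn_integral_mono)
      fix x assume x: "x \<in> space \<nu>"
      show "ennreal \<delta> * ennreal (f S x) \<le> ennreal \<delta> * (ennreal (f S x) * indicator (A S) x) + ennreal (f S x) * ennreal (ll S x)"
      proof (cases "x \<in> A S")
        case True then show ?thesis by simp
      next
        case False
        then have "\<delta> \<le> ll S x" using x by (auto simp: A_def)
        then have "ennreal \<delta> \<le> ennreal (ll S x)" by (rule ennreal_leI)
        then have "ennreal (f S x) * ennreal \<delta> \<le> ennreal (f S x) * ennreal (ll S x)"
          by (rule mult_left_mono) simp
        then have "ennreal \<delta> * ennreal (f S x) \<le> ennreal (f S x) * ennreal (ll S x)"
          by (simp add: mult.commute)
        then show ?thesis using False by simp
      qed
    qed
    also have "\<dots> = ennreal \<delta> * q S + R S"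
      unfolding q_def R_def using S by (simp add: nn_integral_add nn_integral_cmult)
    finally show ?thesis .
  qed
  show ?thesis
  proof (rule ccontr)
    assume "\<not> ?thesis"
    then have lt: "R S < ennreal (\<delta> * (1 - sqrt (N * E / card H)))" if "S \<in> H" for S
      using that unfolding R_def by (auto simp: not_le)
    define w where "w = \<delta> * (1 - sqrt (N * E / card H))"
    obtain S0 where S0: "S0 \<in> H" using H by auto
    have wpos: "w > 0"
    proof (rule ccontr)
      assume "\<not> w > 0" then have "ennreal w = 0" by (simp add: ennreal_eq_0_iff)
      then show False using lt[OF S0] by (simp add: w_def)
    qed
    have Rfin: "R S = ennreal (enn2real (R S))" if "S \<in> H" for S
      using lt[OF that] by (intro ennreal_enn2real[symmetric]) (meson ennreal_less_top order.strict_trans)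
    have rlt: "enn2real (R S) < w" if "S \<in> H" for S
    proof -
      have 1: "ennreal (enn2real (R S)) < ennreal w" using lt[OF that] Rfin[OF that] unfolding w_def by metis
      show ?thesis using 1 ennreal_less_iff[of "enn2real (R S)" w] by simp
    qed
    have "ennreal (hc * \<delta>) = (\<Sum>S\<in>H. ennreal \<delta>)" by (simp add: hc_def ennreal_of_nat_eq_real_of_nat ennreal_mult' \<delta>)
    also have "\<dots> \<le> (\<Sum>S\<in>H. ennreal \<delta> * q S + R S)" by (intro sum_mono step2)
    also have "\<dots> = ennreal \<delta> * (\<Sum>S\<in>H. q S) + (\<Sum>S\<in>H. R S)" by (simp add: sum.distrib sum_distrib_left)
    also have "\<dots> \<le> ennreal \<delta> * ennreal (sqrt (hc * N * E)) + (\<Sum>S\<in>H. ennreal (enn2real (R S)))"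
      using Rfin by (intro add_mono mult_left_mono qsum) (auto intro!: sum_mono)
    also have "\<dots> = ennreal (\<delta> * sqrt (hc * N * E) + (\<Sum>S\<in>H. enn2real (R S)))"
    proof -
      have n: "0 \<le> \<delta>" "0 \<le> sqrt (hc * N * E)" "0 \<le> \<delta> * sqrt (hc * N * E)" "0 \<le> (\<Sum>S\<in>H. enn2real (R S))"
        using \<delta> hc N E by (auto intro: sum_nonneg)
      have "ennreal \<delta> * ennreal (sqrt (hc * N * E)) = ennreal (\<delta> * sqrt (hc * N * E))"
        by (rule ennreal_mult[symmetric]) (use n in auto)
      moreover have "(\<Sum>S\<in>H. ennreal (enn2real (R S))) = ennreal (\<Sum>S\<in>H. enn2real (R S))"
        by (rule sum_ennreal) simp
      moreover have "ennreal (\<delta> * sqrt (hc * N * E)) + ennreal (\<Sum>S\<in>H. enn2real (R S))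
          = ennreal (\<delta> * sqrt (hc * N * E) + (\<Sum>S\<in>H. enn2real (R S)))"
        by (rule ennreal_plus[symmetric]) (use n in auto)
      ultimately show ?thesis by simp
    qed
    finally have "hc * \<delta> \<le> \<delta> * sqrt (hc * N * E) + (\<Sum>S\<in>H. enn2real (R S))"
      using \<delta> hc N E by (subst (asm) ennreal_le_iff) (auto intro!: add_nonneg_nonneg sum_nonneg)
    moreover have "(\<Sum>S\<in>H. enn2real (R S)) < (\<Sum>S\<in>H. w)"
      using H rlt by (intro sum_strict_mono) auto
    moreover have "(\<Sum>S\<in>H. w) = hc * w" by (simp add: hc_def)
    moreover have "hc * w = hc * \<delta> - \<delta> * sqrt (hc * N * E)"
    proof -
      have "hc * sqrt (N * E / hc) = sqrt (hc * (N * E))" by (rule sqrt_avg) (use hc N E in auto)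
      then show ?thesis unfolding w_def hc_def by (simp add: algebra_simps)
    qed
    ultimately show False by linarith
  qed
qed

lemma sum_Pow_pow:
  fixes x :: real assumes "finite A"
  shows "(\<Sum>D\<in>Pow A. x ^ card D) = (1 + x) ^ card A"
  using assms
proof (induct rule: finite_induct)
  case empty show ?case by simp
next
  case (insert a A)
  have disj: "Pow A \<inter> insert a ` Pow A = {}" using insert by blast
  have inj: "inj_on (insert a) (Pow A)"
  proof (rule inj_onI)
    fix X Y assume "X \<in> Pow A" "Y \<in> Pow A" "insert a X = insert a Y"
    then show "X = Y" using insert(2) by (metis Diff_insert_absorb PowD subsetD)
  qed
  have "(\<Sum>D\<in>Pow (insert a A). x ^ card D) = (\<Sum>D\<in>Pow A. x ^ card D) + (\<Sum>D\<in>insert a ` Pow A. x ^ card D)"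
    unfolding Pow_insert by (rule sum.union_disjoint) (use insert disj in auto)
  also have "(\<Sum>D\<in>insert a ` Pow A. x ^ card D) = (\<Sum>D\<in>Pow A. x ^ card (insert a D))"
    by (simp add: sum.reindex[OF inj])
  also have "\<dots> = (\<Sum>D\<in>Pow A. x * x ^ card D)"
  proof (intro sum.cong refl)
    fix D assume "D \<in> Pow A"
    then have "a \<notin> D" "finite D" using insert by (auto intro: finite_subset)
    then show "x ^ card (insert a D) = x * x ^ card D" by simp
  qed
  also have "\<dots> = x * (1 + x) ^ card A" by (subst sum_distrib_left[symmetric]) (simp add: insert)
  finally show ?case using insert by (simp add: algebra_simps)
qed

lemma card_small_subsets:
  fixes x T :: real assumes A: "finite A" and x: "0 < x" "x \<le> 1"
  shows "real (card {D \<in> Pow A. real (card D) < T}) * x powr T \<le> (1 + x) ^ card A"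
proof -
  let ?B = "{D \<in> Pow A. real (card D) < T}"
  have fin: "finite (Pow A)" using A by simp
  have "real (card ?B) * x powr T = (\<Sum>D\<in>?B. x powr T)" by simp
  also have "\<dots> \<le> (\<Sum>D\<in>?B. x ^ card D)"
  proof (intro sum_mono)
    fix D assume "D \<in> ?B"
    then have "real (card D) \<le> T" by auto
    then have "x powr T \<le> x powr real (card D)" using x by (intro powr_mono') auto
    then show "x powr T \<le> x ^ card D" using x by (simp add: powr_realpow)
  qed
  also have "\<dots> \<le> (\<Sum>D\<in>Pow A. x ^ card D)"
    by (rule sum_mono2[OF fin]) (use x in auto)
  also have "\<dots> = (1 + x) ^ card A" by (rule sum_Pow_pow[OF A])
  finally show ?thesis .
qed

lemma card_small_subsets_exp:
  fixes x T :: real assumes A: "finite A" and x: "0 < x" "x \<le> 1"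
  shows "real (card {D \<in> Pow A. real (card D) < T}) \<le> exp (real (card A) * ln (1 + x) - T * ln x)"
proof -
  have "real (card {D \<in> Pow A. real (card D) < T}) \<le> (1 + x) ^ card A / x powr T"
    using card_small_subsets[OF A x] x by (simp add: le_divide_eq)
  also have "(1 + x) ^ card A = exp (real (card A) * ln (1 + x))"
    using x by (simp add: exp_of_nat_mult)
  also have "x powr T = exp (T * ln x)" using x by (simp add: powr_def mult.commute)
  also have "exp (real (card A) * ln (1 + x)) / exp (T * ln x) = exp (real (card A) * ln (1 + x) - T * ln x)"
    by (simp add: exp_diff)
  finally show ?thesis .
qed

lemma ball_card:
  assumes U: "finite U" and S: "S \<subseteq> U" and H: "H \<subseteq> Pow U"
  shows "card {S'\<in>H. real (card (sym_diff S S')) < T} \<le> card {D \<in> Pow U. real (card D) < T}"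
proof (rule card_inj_on_le[where f = "\<lambda>S'. sym_diff S S'"])
  show "inj_on (\<lambda>S'. sym_diff S S') {S' \<in> H. real (card (sym_diff S S')) < T}"
    unfolding inj_on_def by blast
  show "(\<lambda>S'. sym_diff S S') ` {S' \<in> H. real (card (sym_diff S S')) < T} \<subseteq> {D \<in> Pow U. real (card D) < T}"
    using S H by auto
  show "finite {D \<in> Pow U. real (card D) < T}" using U by simp
qed

context glm begin

lemma KL_lower: assumes "\<forall>i<n. \<theta> i \<in> \<Theta>"
  shows "KL a b b1 n \<theta> \<zeta> \<ge> L / (2 * a) * (\<Sum>i<n. (closest_point \<Theta> (\<zeta> i) - \<theta> i)^2)"
proof -
  have "(\<Sum>i<n. L / 2 * (closest_point \<Theta> (\<zeta> i) - \<theta> i)^2)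
      \<le> (\<Sum>i<n. b1 (\<theta> i) * (\<theta> i - \<zeta> i) - b (\<theta> i) + b (\<zeta> i))"
  proof (intro sum_mono)
    fix i assume "i \<in> {..<n}"
    then have "\<theta> i \<in> \<Theta>" using assms by auto
    from D_proj[OF this, of "\<zeta> i"]
    show "L / 2 * (closest_point \<Theta> (\<zeta> i) - \<theta> i)^2 \<le> b1 (\<theta> i) * (\<theta> i - \<zeta> i) - b (\<theta> i) + b (\<zeta> i)"
      by (simp add: algebra_simps)
  qed
  then have ineq: "(1/a) * (\<Sum>i<n. L / 2 * (closest_point \<Theta> (\<zeta> i) - \<theta> i)^2)
      \<le> (1/a) * (\<Sum>i<n. b1 (\<theta> i) * (\<theta> i - \<zeta> i) - b (\<theta> i) + b (\<zeta> i))"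
    using apos by (intro mult_left_mono) auto
  have eq2: "(\<Sum>i<n. L / 2 * (closest_point \<Theta> (\<zeta> i) - \<theta> i)^2) = L / 2 * (\<Sum>i<n. (closest_point \<Theta> (\<zeta> i) - \<theta> i)^2)"
    by (rule sum_distrib_left[symmetric])
  have eq3: "L / (2 * a) * (\<Sum>i<n. (closest_point \<Theta> (\<zeta> i) - \<theta> i)^2) = (1/a) * (L / 2 * (\<Sum>i<n. (closest_point \<Theta> (\<zeta> i) - \<theta> i)^2))"
    by simp
  have e: "L / (2 * a) * (\<Sum>i<n. (closest_point \<Theta> (\<zeta> i) - \<theta> i)^2) = (1/a) * (\<Sum>i<n. L / 2 * (closest_point \<Theta> (\<zeta> i) - \<theta> i)^2)"
    by (subst eq2) (rule eq3)
  show ?thesis unfolding KL_def e by (rule ineq)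
qed

lemma pair_close:
  assumes T1: "\<forall>i<n. \<theta> i \<in> \<Theta>" and T2: "\<forall>i<n. \<theta>' i \<in> \<Theta>"
    and K1: "KL a b b1 n \<theta> \<zeta> < \<delta>" and K2: "KL a b b1 n \<theta>' \<zeta> < \<delta>"
  shows "sqnorm n (\<lambda>i. \<theta> i - \<theta>' i) < 8 * a * \<delta> / L"
proof -
  define z where "z i = closest_point \<Theta> (\<zeta> i)" for i
  have l1: "L / (2 * a) * (\<Sum>i<n. (z i - \<theta> i)^2) < \<delta>" using KL_lower[OF T1, of \<zeta>] K1 by (simp add: z_def)
  have l2: "L / (2 * a) * (\<Sum>i<n. (z i - \<theta>' i)^2) < \<delta>" using KL_lower[OF T2, of \<zeta>] K2 by (simp add: z_def)
  have "sqnorm n (\<lambda>i. \<theta> i - \<theta>' i) \<le> (\<Sum>i<n. 2 * (z i - \<theta> i)^2 + 2 * (z i - \<theta>' i)^2)"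
    unfolding sqnorm_def
  proof (intro sum_mono)
    fix i
    have "0 \<le> ((z i - \<theta> i) + (z i - \<theta>' i))^2" by simp
    then show "(\<theta> i - \<theta>' i)^2 \<le> 2 * (z i - \<theta> i)^2 + 2 * (z i - \<theta>' i)^2"
      by (simp add: power2_eq_square algebra_simps)
  qed
  also have "\<dots> = 2 * (\<Sum>i<n. (z i - \<theta> i)^2) + 2 * (\<Sum>i<n. (z i - \<theta>' i)^2)"
    by (simp add: sum.distrib sum_distrib_left)
  also have "\<dots> < 8 * a * \<delta> / L"
  proof -
    have c: "L / (2 * a) > 0" using Lpos apos by simp
    have "(\<Sum>i<n. (z i - \<theta> i)^2) < \<delta> / (L / (2 * a))" using l1 by (subst pos_less_divide_eq[OF c]) (metis mult.commute)
    moreover have "(\<Sum>i<n. (z i - \<theta>' i)^2) < \<delta> / (L / (2 * a))" using l2 by (subst pos_less_divide_eq[OF c]) (metis mult.commute)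
    moreover have "\<delta> / (L / (2 * a)) = 2 * a * \<delta> / L" using Lpos apos by (simp add: field_simps)
    moreover have "4 * (2 * a * \<delta> / L) = 8 * a * \<delta> / L" by simp
    ultimately show ?thesis by linarith
  qed
  finally show ?thesis .
qed

end

context glm begin

lemma b_meas[measurable]: "b \<in> borel_measurable borel"
proof (rule borel_measurable_continuous_onI)
  show "continuous_on UNIV b"
    using db by (intro continuous_at_imp_continuous_on) (auto intro: DERIV_isCont)
qed

lemma glm_lower:
  fixes n p :: nat and X :: "nat \<Rightarrow> nat \<Rightarrow> real" and H :: "nat set set" and Uset :: "nat set"
    and C V T x :: real and k :: nat and \<theta>h :: "(nat \<Rightarrow> real) \<Rightarrow> (nat \<Rightarrow> real)"
  assumes H: "finite H" "H \<noteq> {}" "H \<subseteq> Pow Uset" and Us: "Uset \<subseteq> {..<p}"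
    and C: "C > 0"
    and inT: "\<And>S. S \<in> H \<Longrightarrow> \<forall>i<n. matvec p X (bS C S) i \<in> \<Theta>"
    and V: "\<And>S. S \<in> H \<Longrightarrow> sqnorm n (matvec p X (bS C S)) \<le> V"
    and Hk: "\<And>S S'. S \<in> H \<Longrightarrow> S' \<in> H \<Longrightarrow> card (sym_diff S S') \<le> k"
    and pm: "phi_min n p X k > 0"
    and est: "\<theta>h \<in> estimators n"
    and x: "0 < x" "x \<le> 1" and T: "T > 0"
  shows "\<exists>S\<in>H. risk n p X \<mu> a b b1 c \<theta>h (bS C S) \<ge>
     ennreal (L / (8 * a) * phi_min n p X k * C^2 * T *
       (1 - sqrt (exp (real (card Uset) * ln (1 + x) - T * ln x) * exp (U / a * V) / real (card H))))"
proof -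
  define \<nu> where "\<nu> = PiM {..<n} (\<lambda>_::nat. \<mu>)"
  define \<theta> where "\<theta> S = matvec p X (bS C S)" for S
  define \<delta> where "\<delta> = L / (8 * a) * phi_min n p X k * C^2 * T"
  define N where "N = exp (real (card Uset) * ln (1 + x) - T * ln x)"
  define E where "E = exp (U / a * V)"
  have \<delta>pos: "\<delta> > 0" using Lpos apos pm C T by (simp add: \<delta>_def)
  have th_meas[measurable]: "(\<lambda>y. \<theta>h y i) \<in> borel_measurable \<nu>" if "i \<in> {..<n}" for i
  proof -
    have "(\<lambda>y. \<theta>h y i) \<in> borel_measurable (PiM {..<n} (\<lambda>_. borel))" using est that by (auto simp: estimators_def)
    then show ?thesis unfolding \<nu>_def using measurable_cong_sets[OF sets_nu refl] by blast
  qed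
  have ll_meas[measurable]: "(\<lambda>y. KL a b b1 n (\<theta> S) (\<theta>h y)) \<in> borel_measurable \<nu>" for S
    unfolding KL_def by measurable
  have F_meas'[measurable]: "(\<lambda>y. F n \<theta>' y) \<in> borel_measurable \<nu>" for \<theta>'
    unfolding \<nu>_def by (rule F_meas)
  have risk_eq: "risk n p X \<mu> a b b1 c \<theta>h (bS C S)
      = (\<integral>\<^sup>+ y. ennreal (F n (\<theta> S) y) * ennreal (KL a b b1 n (\<theta> S) (\<theta>h y)) \<partial>\<nu>)" for S
  proof -
    have dd: "data_dist n p X \<mu> a b c (bS C S) = density \<nu> (\<lambda>y. ennreal (F n (\<theta> S) y))"
      unfolding data_dist_def \<nu>_def \<theta>_def by (rule PiM_dens)
    have "risk n p X \<mu> a b b1 c \<theta>h (bS C S) = (\<integral>\<^sup>+ y. ennreal (KL a b b1 n (\<theta> S) (\<theta>h y)) \<partial>data_dist n p X \<mu> a b c (bS C S))"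
      unfolding risk_def \<theta>_def ..
    also have "\<dots> = (\<integral>\<^sup>+ y. ennreal (F n (\<theta> S) y) * ennreal (KL a b b1 n (\<theta> S) (\<theta>h y)) \<partial>\<nu>)"
      unfolding dd by (rule nn_integral_density) simp_all
    finally show ?thesis .
  qed
  have core: "\<exists>S\<in>H. (\<integral>\<^sup>+ y. ennreal (F n (\<theta> S) y) * ennreal (KL a b b1 n (\<theta> S) (\<theta>h y)) \<partial>\<nu>)
            \<ge> ennreal (\<delta> * (1 - sqrt (N * E / card H)))"
  proof (rule minimax_core[where f = "\<lambda>S. F n (\<theta> S)" and ?g0.0 = "F n (\<lambda>_. 0)"])
    show "finite H" "H \<noteq> {}" using H by auto
    show "\<And>S. S \<in> H \<Longrightarrow> F n (\<theta> S) \<in> borel_measurable \<nu>" by simp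
    show "F n (\<lambda>_. 0) \<in> borel_measurable \<nu>" by simp
    show "\<And>S. S \<in> H \<Longrightarrow> (\<lambda>y. KL a b b1 n (\<theta> S) (\<theta>h y)) \<in> borel_measurable \<nu>" by simp
    show "\<And>S y. 0 \<le> F n (\<theta> S) y" by (simp add: F_pos less_imp_le)
    show "\<And>y. 0 < F n (\<lambda>_. 0) y" by (simp add: F_pos)
    show "\<And>S. (\<integral>\<^sup>+ y. ennreal (F n (\<theta> S) y) \<partial>\<nu>) = 1" unfolding \<nu>_def by (rule F_int)
    show "(\<integral>\<^sup>+ y. ennreal (F n (\<lambda>_. 0) y) \<partial>\<nu>) = 1" unfolding \<nu>_def by (rule F_int)
    show "E > 0" "N > 0" "0 \<le> \<delta>" using \<delta>pos by (auto simp: E_def N_def)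
  next
    fix S assume S: "S \<in> H"
    have "(\<integral>\<^sup>+ y. ennreal (F n (\<theta> S) y ^ 2 / F n (\<lambda>_. 0) y) \<partial>\<nu>)
        = ennreal (\<Prod>i<n. exp ((b (2 * \<theta> S i) - 2 * b (\<theta> S i) + b 0) / a))"
      unfolding \<nu>_def by (rule chi2)
    also have "\<dots> \<le> ennreal (exp (U / a * (\<Sum>i<n. (\<theta> S i)^2)))"
      by (intro ennreal_leI chi2_bound)
    also have "\<dots> \<le> ennreal E"
    proof (intro ennreal_leI)
      have "(\<Sum>i<n. (\<theta> S i)^2) \<le> V" using V[OF S] by (simp add: \<theta>_def sqnorm_def)
      then have "U / a * (\<Sum>i<n. (\<theta> S i)^2) \<le> U / a * V"
        using Lpos LU apos by (intro mult_left_mono) auto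
      then show "exp (U / a * (\<Sum>i<n. (\<theta> S i)^2)) \<le> E" by (simp add: E_def)
    qed
    finally show "(\<integral>\<^sup>+ y. ennreal (F n (\<theta> S) y ^ 2 / F n (\<lambda>_. 0) y) \<partial>\<nu>) \<le> ennreal E" .
  next
    fix y assume y: "y \<in> space \<nu>"
    let ?Q = "{S \<in> H. KL a b b1 n (\<theta> S) (\<theta>h y) < \<delta>}"
    have close: "real (card (sym_diff S0 S')) < T" if S0: "S0 \<in> ?Q" and S': "S' \<in> ?Q" for S0 S'
    proof -
      have SH: "S0 \<in> H" "S' \<in> H" using S0 S' by auto
      have sub: "S0 \<subseteq> {..<p}" "S' \<subseteq> {..<p}" using SH H Us by auto
      have "sqnorm n (\<lambda>i. \<theta> S0 i - \<theta> S' i) < 8 * a * \<delta> / L"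
        by (rule pair_close) (use S0 S' inT SH in \<open>auto simp: \<theta>_def\<close>)
      moreover have "sqnorm n (\<lambda>i. \<theta> S0 i - \<theta> S' i) = sqnorm n (matvec p X (bD C S0 S'))"
        unfolding \<theta>_def bD_def sqnorm_def by (simp add: matvec_diff)
      moreover have "phi_min n p X k * sqnorm p (bD C S0 S') \<le> sqnorm n (matvec p X (bD C S0 S'))"
        by (rule phi_min_lower) (use sub Hk[OF SH] C in \<open>auto simp: bD_vecs bD_l0\<close>)
      moreover have "sqnorm p (bD C S0 S') = C^2 * card (sym_diff S0 S')" by (rule bD_sqnorm[OF sub])
      moreover have "8 * a * \<delta> / L = phi_min n p X k * C^2 * T"
        using Lpos apos by (simp add: \<delta>_def field_simps)
      ultimately have "phi_min n p X k * C^2 * real (card (sym_diff S0 S')) < phi_min n p X k * C^2 * T"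
        by (simp add: mult.assoc)
      then show ?thesis using pm C by (simp add: mult_less_cancel_left_pos)
    qed
    show "real (card ?Q) \<le> N"
    proof (cases "?Q = {}")
      case True then have "card ?Q = 0" by (simp only: True card.empty)
      then show ?thesis by (simp add: N_def)
    next
      case False
      then obtain S0 where S0: "S0 \<in> ?Q" by auto
      have finU: "finite Uset" using Us finite_subset by blast
      have "?Q \<subseteq> {S' \<in> H. real (card (sym_diff S0 S')) < T}" using close S0 by auto
      then have "card ?Q \<le> card {S' \<in> H. real (card (sym_diff S0 S')) < T}"
        by (rule card_mono[rotated]) (use H in auto)
      also have "\<dots> \<le> card {D \<in> Pow Uset. real (card D) < T}"
        by (rule ball_card[OF finU]) (use S0 H in auto)
      finally have "real (card ?Q) \<le> real (card {D \<in> Pow Uset. real (card D) < T})" by simp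
      also have "\<dots> \<le> N" unfolding N_def by (rule card_small_subsets_exp[OF finU x])
      finally show ?thesis .
    qed
  qed
  then show ?thesis unfolding risk_eq by (simp add: \<delta>_def N_def E_def)
qed

end

lemma exp_m3: "exp (-3::real) \<le> 1/4"
proof -
  have "4 \<le> exp (3::real)" using exp_ge_add_one_self[of 3] by simp
  then show ?thesis by (simp add: exp_minus divide_simps)
qed

lemma sqrt_exp_bound: assumes "z \<le> exp (-1/4::real)" "0 \<le> z" shows "sqrt z \<le> 8/9"
proof -
  have "sqrt z \<le> sqrt (exp (-1/4))" using assms by simp
  also have "sqrt (exp (-1/4::real)) = exp (-1/8)"
  proof -
    have "(exp (-1/8::real))^2 = exp (-1/4)" by (simp add: power2_eq_square exp_add[symmetric])
    then show ?thesis by (metis exp_ge_zero real_sqrt_unique)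
  qed
  also have "exp (-1/8::real) \<le> 8/9"
  proof -
    have "9/8 \<le> exp (1/8::real)" using exp_ge_add_one_self[of "1/8"] by simp
    then show ?thesis by (simp add: exp_minus divide_simps)
  qed
  finally show ?thesis .
qed

lemma num_case1:
  fixes P0 R :: real assumes P0: "P0 \<ge> 1" and R: "R \<ge> 2"
  shows "R * P0 * ln (1 + exp (-3) / R) - P0 / 40 * ln (exp (-3) / R) + 1/32 * P0 * (1 + ln R) - P0 * ln R \<le> -1/4"
proof -
  have Rp: "R > 0" using R by simp
  have "ln (1 + exp (-3) / R) \<le> exp (-3) / R" by (rule ln_add_one_self_le_self) (use Rp in simp)
  then have "R * P0 * ln (1 + exp (-3) / R) \<le> R * P0 * (exp (-3) / R)"
    using Rp P0 by (intro mult_left_mono) auto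
  also have "\<dots> = P0 * exp (-3)" using Rp by simp
  also have "\<dots> \<le> P0 * (1/4)" using P0 exp_m3 by (intro mult_left_mono) auto
  finally have a1: "R * P0 * ln (1 + exp (-3) / R) \<le> P0 / 4" by simp
  have a2: "ln (exp (-3) / R) = -3 - ln R" using Rp by (simp add: ln_div)
  have lnR: "ln R \<ge> 2/3"
  proof -
    have "ln 2 \<le> ln R" using R by simp
    then show ?thesis using ln2_ge_two_thirds by linarith
  qed
  define q where "q = 57/160 - 151/160 * ln R"
  have q: "q \<le> -1/4" using lnR by (simp add: q_def)
  have "R * P0 * ln (1 + exp (-3) / R) - P0 / 40 * ln (exp (-3) / R) + 1/32 * P0 * (1 + ln R) - P0 * ln R
      \<le> P0 / 4 + P0 / 40 * (3 + ln R) + 1/32 * P0 * (1 + ln R) - P0 * ln R"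
  proof -
    have eq: "- (P0 / 40 * ln (exp (-3) / R)) = P0 / 40 * (3 + ln R)" 
    proof -
      have a2': "ln (exp (-3) / R) = - (3 + ln R)" using a2 by simp
      show ?thesis by (simp only: a2' mult_minus_right minus_minus)
    qed
    show ?thesis using a1 eq by linarith
  qed
  also have "\<dots> = P0 * q" unfolding q_def by (simp add: field_simps)
  also have "\<dots> \<le> 1 * q" using P0 q by (intro mult_right_mono_neg) auto
  finally show ?thesis using q by simp
qed

lemma num_case2:
  fixes P0 :: real assumes P0: "P0 \<ge> 1"
  shows "P0 * ln (1 + exp (-3)) - P0 / 40 * ln (exp (-3)) + ln 2 / 64 * P0 - P0 * ln 2 \<le> -1/4"
proof -
  have "ln (1 + exp (-3::real)) \<le> exp (-3)" by (rule ln_add_one_self_le_self) simp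
  then have l1: "ln (1 + exp (-3::real)) \<le> 1/4" using exp_m3 by linarith
  define q where "q = ln (1 + exp (-3::real)) + 3/40 - 63/64 * ln 2"
  have q: "q \<le> -1/4" using l1 ln2_ge_two_thirds by (simp add: q_def)
  have "P0 * ln (1 + exp (-3)) - P0 / 40 * ln (exp (-3)) + ln 2 / 64 * P0 - P0 * ln 2 = P0 * q"
    by (simp add: q_def algebra_simps)
  also have "\<dots> \<le> 1 * q" using P0 q by (intro mult_right_mono_neg) auto
  finally show ?thesis using q by simp
qed

lemma col_rank_le: "col_rank n p X \<le> p"
proof -
  let ?A = "{card J | J. J \<subseteq> {..<p} \<and> cols_indep n X J}"
  have sub: "?A \<subseteq> {..p}"
  proof
    fix m assume "m \<in> ?A"
    then obtain J where "m = card J" "J \<subseteq> {..<p}" by auto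
    then have "m \<le> card {..<p}" by (metis card_mono finite_lessThan)
    then show "m \<in> {..p}" by simp
  qed
  have "0 \<in> ?A" by (auto simp: cols_indep_def intro!: exI[of _ "{}"])
  then have "?A \<noteq> {}" by auto
  moreover have "finite ?A" using sub finite_subset by blast
  ultimately show ?thesis unfolding col_rank_def using sub by (subst Max_le_iff) auto
qed

lemma bS_in_B: assumes "bS C S \<in> B_set n p X \<Theta> p0" shows "\<forall>i<n. matvec p X (bS C S) i \<in> \<Theta>"
  using assms by (simp add: B_set_def)

context glm begin

lemma final_ineq:
  fixes \<delta> s target :: real
  assumes "s \<le> 8/9" "\<delta> \<ge> 0" "target \<le> \<delta> / 9"
  shows "ennreal target \<le> ennreal (\<delta> * (1 - s))"
proof (rule ennreal_leI)
  have "\<delta> * (1/9) \<le> \<delta> * (1 - s)" using assms by (intro mult_left_mono) auto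
  then show "target \<le> \<delta> * (1 - s)" using assms by simp
qed

lemma case1:
  fixes n p p0 :: nat and X :: "nat \<Rightarrow> nat \<Rightarrow> real" and \<theta>h :: "(nat \<Rightarrow> real) \<Rightarrow> (nat \<Rightarrow> real)"
  assumes p0: "1 \<le> p0" "2 * p0 \<le> p"
    and sub: "Btilde1 p (sqrt (1/16 * (1/2) * (a / U) * inverse (phi_max n p X (2 * p0))
                          * ln (real p * exp 1 / real p0))) p0 \<subseteq> B_set n p X \<Theta> p0"
    and est: "\<theta>h \<in> estimators n"
  shows "ennreal (1/552960 * (L / U) * tau n p X (2 * p0) * real p0 * ln (real p * exp 1 / real p0))
          \<le> (SUP \<beta>\<in>B_set n p X \<Theta> p0. risk n p X \<mu> a b b1 c \<theta>h \<beta>)"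
proof -
  define k where "k = 2 * p0"
  define l0 where "l0 = ln (real p * exp 1 / real p0)"
  define R where "R = real p / real p0"
  have p0pos: "real p0 \<ge> 1" using p0 by simp
  have R2: "R \<ge> 2" using p0 by (simp add: R_def le_divide_eq)
  have Rpos: "R > 0" using R2 by simp
  have pR: "real p = R * real p0" using p0 by (simp add: R_def)
  have l0R: "l0 = 1 + ln R"
  proof -
    have "real p * exp 1 / real p0 = R * exp 1" by (simp add: R_def)
    then show ?thesis unfolding l0_def using Rpos by (simp add: ln_mult)
  qed
  have l0pos: "l0 > 0" using l0R R2 by (smt (verit) ln_ge_zero)
  have pp: "1 \<le> p" "1 \<le> k" using p0 by (auto simp: k_def)
  show ?thesis
  proof (cases "tau n p X k > 0")
    case False
    have "1/552960 * (L / U) * tau n p X k * real p0 * l0 \<le> 0"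
    proof -
      have "0 \<le> 1/552960 * (L / U)" using Lpos LU by simp
      then have "1/552960 * (L / U) * tau n p X k \<le> 0" by (rule mult_nonneg_nonpos) (use False in auto)
      then have "1/552960 * (L / U) * tau n p X k * (real p0 * l0) \<le> 0"
        by (rule mult_nonpos_nonneg) (use l0pos in auto)
      then show ?thesis by (simp add: mult.assoc)
    qed
    then have "ennreal (1/552960 * (L / U) * tau n p X k * real p0 * l0) = 0" by (simp add: ennreal_eq_0_iff)
    then show ?thesis by (simp add: k_def l0_def)
  next
    case True
    have nn: "phi_min n p X k \<ge> 0" "phi_max n p X k \<ge> 0" using phi_nonneg[OF pp] by auto
    have pm: "phi_min n p X k > 0" using True nn by (cases "phi_min n p X k = 0") (auto simp: tau_def)
    have pM: "phi_max n p X k > 0" using True nn by (cases "phi_max n p X k = 0") (auto simp: tau_def)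
    define Csq where "Csq = 1/16 * (1/2) * (a / U) * inverse (phi_max n p X k) * l0"
    have Csq: "Csq > 0" using pM l0pos apos Lpos LU by (simp add: Csq_def)
    define C where "C = sqrt Csq"
    have C: "C > 0" "C^2 = Csq" using Csq by (auto simp: C_def)
    define H where "H = {S. S \<subseteq> {..<p} \<and> card S = p0}"
    have Hfin: "finite H" unfolding H_def by (rule finite_subset[of _ "Pow {..<p}"]) auto
    have Hsub: "H \<subseteq> Pow {..<p}" by (auto simp: H_def)
    have Hne: "H \<noteq> {}"
    proof -
      have "{..<p0} \<in> H" using p0 by (auto simp: H_def)
      then show ?thesis by auto
    qed
    have Hcard: "card H = p choose p0"
      unfolding H_def using n_subsets[of "{..<p}" p0] by simp
    have inB: "bS C S \<in> B_set n p X \<Theta> p0" if S: "S \<in> H" for S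
    proof -
      have SS: "S \<subseteq> {..<p}" "card S = p0" using S by (auto simp: H_def)
      have "{j \<in> {..<p}. bS C S j = C} = S" using SS C by (auto simp: bS_def)
      then have "bS C S \<in> Btilde1 p C p0"
        unfolding Btilde1_def using SS bS_vecs[OF SS(1)] by (auto simp: bS_def)
      then show ?thesis using sub unfolding C_def Csq_def l0_def k_def by auto
    qed
    define V where "V = phi_max n p X k * Csq * real p0"
    have Vb: "sqnorm n (matvec p X (bS C S)) \<le> V" if S: "S \<in> H" for S
    proof -
      have SS: "S \<subseteq> {..<p}" "card S = p0" using S by (auto simp: H_def)
      have "sqnorm n (matvec p X (bS C S)) \<le> phi_max n p X k * sqnorm p (bS C S)"
        by (rule phi_max_upper) (use SS C bS_vecs[OF SS(1)] bS_l0[OF SS(1)] in \<open>auto simp: k_def\<close>)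
      also have "sqnorm p (bS C S) = Csq * real p0" using bS_sqnorm[OF SS(1)] SS C by simp
      finally show ?thesis by (simp add: V_def mult.assoc)
    qed
    have Hk: "card (sym_diff S S') \<le> k" if "S \<in> H" "S' \<in> H" for S S'
    proof -
      have f: "finite S" "finite S'" "card S = p0" "card S' = p0" using that by (auto simp: H_def intro: finite_subset)
      have "card (sym_diff S S') \<le> card (S \<union> S')" by (rule card_mono) (use f in auto)
      also have "\<dots> \<le> card S + card S'" by (rule card_Un_le)
      finally show ?thesis using f by (simp add: k_def)
    qed
    define x where "x = exp (-3) / R"
    have x: "0 < x" "x \<le> 1"
    proof -
      show "0 < x" using Rpos by (simp add: x_def)
      have "exp (-3::real) \<le> 1" by simp
      then have "exp (-3::real) \<le> R" using R2 by linarith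
      then show "x \<le> 1" using R2 by (simp add: x_def divide_le_eq)
    qed
    define T where "T = real p0 / 40"
    have T: "T > 0" using p0 by (simp add: T_def)
    obtain S where S: "S \<in> H" and risk: "risk n p X \<mu> a b b1 c \<theta>h (bS C S) \<ge>
       ennreal (L / (8 * a) * phi_min n p X k * C^2 * T *
         (1 - sqrt (exp (real (card {..<p}) * ln (1 + x) - T * ln x) * exp (U / a * V) / real (card H))))"
      using glm_lower[OF Hfin Hne Hsub order.refl C(1) _ Vb Hk pm est x T] inB bS_in_B by blast
    define s where "s = sqrt (exp (real (card {..<p}) * ln (1 + x) - T * ln x) * exp (U / a * V) / real (card H))"
    define \<delta> where "\<delta> = L / (8 * a) * phi_min n p X k * C^2 * T"
    have s: "s \<le> 8/9"
    proof -
      have UV: "U / a * V = 1/32 * real p0 * (1 + ln R)"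
        using pM apos Lpos LU by (simp add: V_def Csq_def l0R field_simps)
      have cardH: "real (card H) \<ge> exp (real p0 * ln R)"
      proof -
        have "exp (real p0 * ln R) = R ^ p0" using Rpos by (simp add: exp_of_nat_mult)
        also have "\<dots> \<le> real (p choose p0)" unfolding R_def
          by (rule binomial_ge_n_over_k_pow_k) (use p0 in simp)
        finally show ?thesis by (simp add: Hcard)
      qed
      have e: "exp (real (card {..<p}) * ln (1 + x) - T * ln x) * exp (U / a * V)
          = exp (R * real p0 * ln (1 + exp (-3) / R) - real p0 / 40 * ln (exp (-3) / R) + 1/32 * real p0 * (1 + ln R))"
        unfolding UV by (simp add: exp_add[symmetric] pR x_def T_def)
      have "exp (real (card {..<p}) * ln (1 + x) - T * ln x) * exp (U / a * V) / real (card H)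
          \<le> exp (R * real p0 * ln (1 + exp (-3) / R) - real p0 / 40 * ln (exp (-3) / R) + 1/32 * real p0 * (1 + ln R)) / exp (real p0 * ln R)"
      proof -
        have cp: "real (card H) > 0" using cardH exp_gt_zero[of "real p0 * ln R"] by linarith
        show ?thesis unfolding e by (rule divide_left_mono) (use cardH cp in auto)
      qed
      also have "\<dots> = exp (R * real p0 * ln (1 + exp (-3) / R) - real p0 / 40 * ln (exp (-3) / R) + 1/32 * real p0 * (1 + ln R) - real p0 * ln R)"
        by (simp add: exp_diff)
      also have "\<dots> \<le> exp (-1/4)"
        using num_case1[OF p0pos R2] by simp
      finally show ?thesis unfolding s_def by (rule sqrt_exp_bound) simp
    qed
    have \<delta>: "\<delta> \<ge> 0" using Lpos apos pm C(1) T unfolding \<delta>_def by (intro mult_nonneg_nonneg) auto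
    have tgt: "1/552960 * (L / U) * tau n p X k * real p0 * l0 \<le> \<delta> / 9"
    proof -
      have eq: "\<delta> = (L / U) * tau n p X k * real p0 * l0 / 10240"
        using pM apos Lpos LU unfolding \<delta>_def C(2) Csq_def T_def tau_def by (simp add: field_simps)
      have "0 \<le> (L / U) * tau n p X k * real p0 * l0" using Lpos LU True l0pos by simp
      then show ?thesis unfolding eq by simp
    qed
    have "ennreal (1/552960 * (L / U) * tau n p X k * real p0 * l0) \<le> ennreal (\<delta> * (1 - s))"
      by (rule final_ineq[OF s \<delta> tgt])
    also have "\<dots> \<le> risk n p X \<mu> a b b1 c \<theta>h (bS C S)" using risk by (simp add: s_def \<delta>_def)
    also have "\<dots> \<le> (SUP \<beta>\<in>B_set n p X \<Theta> p0. risk n p X \<mu> a b b1 c \<theta>h \<beta>)"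
      by (rule SUP_upper[OF inB[OF S]])
    finally show ?thesis by (simp add: k_def l0_def)
  qed
qed

lemma case2:
  fixes n p p0 r :: nat and X :: "nat \<Rightarrow> nat \<Rightarrow> real" and \<theta>h :: "(nat \<Rightarrow> real) \<Rightarrow> (nat \<Rightarrow> real)"
  assumes p0: "1 \<le> p0" "p0 \<le> p" and r: "r \<le> 2 * p0"
    and sub: "Btilde2 p (sqrt (ln 2 / 64 * (a / U) * inverse (phi_max n p X p0))) p0
           \<subseteq> B_set n p X \<Theta> p0"
    and est: "\<theta>h \<in> estimators n"
  shows "ennreal (1/552960 * (L / U) * tau n p X p0 * real r)
          \<le> (SUP \<beta>\<in>B_set n p X \<Theta> p0. risk n p X \<mu> a b b1 c \<theta>h \<beta>)"
proof -
  define k where "k = p0"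
  have p0pos: "real p0 \<ge> 1" using p0 by simp
  have pp: "1 \<le> p" "1 \<le> k" using p0 by (auto simp: k_def)
  show ?thesis
  proof (cases "tau n p X k > 0")
    case False
    have "1/552960 * (L / U) * tau n p X k * real r \<le> 0"
    proof -
      have "0 \<le> 1/552960 * (L / U)" using Lpos LU by simp
      then have "1/552960 * (L / U) * tau n p X k \<le> 0" by (rule mult_nonneg_nonpos) (use False in auto)
      then show ?thesis by (rule mult_nonpos_nonneg) auto
    qed
    then have "ennreal (1/552960 * (L / U) * tau n p X k * real r) = 0" by (simp add: ennreal_eq_0_iff)
    then show ?thesis by (simp add: k_def)
  next
    case True
    have nn: "phi_min n p X k \<ge> 0" "phi_max n p X k \<ge> 0" using phi_nonneg[OF pp] by auto
    have pm: "phi_min n p X k > 0" using True nn by (cases "phi_min n p X k = 0") (auto simp: tau_def)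
    have pM: "phi_max n p X k > 0" using True nn by (cases "phi_max n p X k = 0") (auto simp: tau_def)
    define Csq where "Csq = ln 2 / 64 * (a / U) * inverse (phi_max n p X k)"
    have Csq: "Csq > 0" using pM apos Lpos LU by (simp add: Csq_def)
    define C where "C = sqrt Csq"
    have C: "C > 0" "C^2 = Csq" using Csq by (auto simp: C_def)
    define H where "H = Pow {..<p0}"
    have Hfin: "finite H" by (simp add: H_def)
    have Hsub: "H \<subseteq> Pow {..<p0}" by (simp add: H_def)
    have Hne: "H \<noteq> {}" by (auto simp: H_def)
    have Us: "{..<p0} \<subseteq> {..<p}" using p0 by auto
    have Hcard: "card H = 2 ^ p0" by (simp add: H_def card_Pow)
    have inB: "bS C S \<in> B_set n p X \<Theta> p0" if S: "S \<in> H" for S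
    proof -
      have SS: "S \<subseteq> {..<p0}" "S \<subseteq> {..<p}" using S Us by (auto simp: H_def)
      have "bS C S \<in> Btilde2 p C p0"
        unfolding Btilde2_def using SS bS_vecs[OF SS(2)] by (auto simp: bS_def)
      then show ?thesis using sub unfolding C_def Csq_def k_def by auto
    qed
    define V where "V = phi_max n p X k * Csq * real p0"
    have Vb: "sqnorm n (matvec p X (bS C S)) \<le> V" if S: "S \<in> H" for S
    proof -
      have SS: "S \<subseteq> {..<p0}" "S \<subseteq> {..<p}" using S Us by (auto simp: H_def)
      have cS: "card S \<le> p0" using card_mono[OF _ SS(1)] by simp
      have "sqnorm n (matvec p X (bS C S)) \<le> phi_max n p X k * sqnorm p (bS C S)"
        by (rule phi_max_upper) (use SS C cS bS_vecs[OF SS(2)] bS_l0[OF SS(2)] in \<open>auto simp: k_def\<close>)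
      also have "sqnorm p (bS C S) = Csq * real (card S)" using bS_sqnorm[OF SS(2)] C by simp
      also have "phi_max n p X k * (Csq * real (card S)) \<le> phi_max n p X k * (Csq * real p0)"
        using pM Csq cS by (intro mult_left_mono) auto
      finally show ?thesis by (simp add: V_def mult.assoc)
    qed
    have Hk: "card (sym_diff S S') \<le> k" if "S \<in> H" "S' \<in> H" for S S'
    proof -
      have "sym_diff S S' \<subseteq> {..<p0}" using that by (auto simp: H_def)
      then have "card (sym_diff S S') \<le> card {..<p0}" by (rule card_mono[rotated]) simp
      then show ?thesis by (simp add: k_def)
    qed
    define x where "x = exp (-3::real)"
    have x: "0 < x" "x \<le> 1" by (auto simp: x_def)
    define T where "T = real p0 / 40"
    have T: "T > 0" using p0 by (simp add: T_def)
    obtain S where S: "S \<in> H" and risk: "risk n p X \<mu> a b b1 c \<theta>h (bS C S) \<ge>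
       ennreal (L / (8 * a) * phi_min n p X k * C^2 * T *
         (1 - sqrt (exp (real (card {..<p0}) * ln (1 + x) - T * ln x) * exp (U / a * V) / real (card H))))"
      using glm_lower[OF Hfin Hne Hsub Us C(1) _ Vb Hk pm est x T] inB bS_in_B by blast
    define s where "s = sqrt (exp (real (card {..<p0}) * ln (1 + x) - T * ln x) * exp (U / a * V) / real (card H))"
    define \<delta> where "\<delta> = L / (8 * a) * phi_min n p X k * C^2 * T"
    have s: "s \<le> 8/9"
    proof -
      have UV: "U / a * V = ln 2 / 64 * real p0"
        using pM apos Lpos LU by (simp add: V_def Csq_def field_simps)
      have cardH: "real (card H) = exp (real p0 * ln 2)"
        by (simp add: Hcard exp_of_nat_mult)
      have "exp (real (card {..<p0}) * ln (1 + x) - T * ln x) * exp (U / a * V) / real (card H)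
          = exp (real p0 * ln (1 + exp (-3)) - real p0 / 40 * ln (exp (-3)) + ln 2 / 64 * real p0 - real p0 * ln 2)"
        unfolding UV cardH by (simp add: exp_add[symmetric] exp_diff[symmetric] x_def T_def)
      also have "\<dots> \<le> exp (-1/4)"
        using num_case2[OF p0pos] by simp
      finally show ?thesis unfolding s_def by (rule sqrt_exp_bound) simp
    qed
    have \<delta>: "\<delta> \<ge> 0" using Lpos apos pm C(1) T unfolding \<delta>_def by (intro mult_nonneg_nonneg) auto
    have tgt: "1/552960 * (L / U) * tau n p X k * real r \<le> \<delta> / 9"
    proof -
      have eq: "\<delta> = (L / U) * tau n p X k * (ln 2 * real p0) / 20480"
        using pM apos Lpos LU unfolding \<delta>_def C(2) Csq_def T_def tau_def by (simp add: field_simps)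
      have Q: "0 \<le> (L / U) * tau n p X k" using Lpos LU True by simp
      have "real r \<le> 3 * (ln 2 * real p0)"
      proof -
        have "real r \<le> 2 * real p0" using r by simp
        also have "\<dots> \<le> 3 * (ln 2 * real p0)" using ln2_ge_two_thirds p0pos by simp
        finally show ?thesis .
      qed
      then have h: "(L / U) * tau n p X k * real r \<le> (L / U) * tau n p X k * (3 * (ln 2 * real p0))"
        by (rule mult_left_mono[OF _ Q])
      define QQ where "QQ = (L / U) * tau n p X k"
      have e1: "1/552960 * (L / U) * tau n p X k * real r = (QQ * real r) / 552960" by (simp add: QQ_def)
      have e2: "(L / U) * tau n p X k * (ln 2 * real p0) / 20480 / 9 = (QQ * (ln 2 * real p0)) / 184320"
        by (simp add: QQ_def)
      have e3: "(L / U) * tau n p X k * (3 * (ln 2 * real p0)) = 3 * (QQ * (ln 2 * real p0))"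
        by (simp add: QQ_def)
      have "QQ * real r \<le> 3 * (QQ * (ln 2 * real p0))" using h e3 unfolding QQ_def by metis
      then show ?thesis unfolding eq e1 e2 by linarith
    qed
    have "ennreal (1/552960 * (L / U) * tau n p X k * real r) \<le> ennreal (\<delta> * (1 - s))"
      by (rule final_ineq[OF s \<delta> tgt])
    also have "\<dots> \<le> risk n p X \<mu> a b b1 c \<theta>h (bS C S)" using risk by (simp add: s_def \<delta>_def)
    also have "\<dots> \<le> (SUP \<beta>\<in>B_set n p X \<Theta> p0. risk n p X \<mu> a b b1 c \<theta>h \<beta>)"
      by (rule SUP_upper[OF inB[OF S]])
    finally show ?thesis by (simp add: k_def)
  qed
qed

end

lemma theorem2_main:
  fixes n p :: nat and X :: "nat \<Rightarrow> nat \<Rightarrow> real" and r :: nat and \<Theta> :: "real set" and \<mu> :: "real measure"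
    and a :: real and b b1 b2 :: "real \<Rightarrow> real" and c :: "real \<Rightarrow> real \<Rightarrow> real" and L U :: real and p0 :: nat
  assumes rdef: "r = col_rank n p X"
    and "\<forall>J. J \<subseteq> {..<p} \<and> card J = r \<longrightarrow> cols_indep n X J"
    and "sets \<mu> = sets borel"
    and "(\<lambda>y. c y a) \<in> borel_measurable borel"
    and "\<forall>\<theta>. prob_space (density \<mu> (\<lambda>y. ennreal (glm_density a b c \<theta> y)))"
    and "is_interval \<Theta>" "closed \<Theta>"
    and "\<forall>t. (b has_real_derivative b1 t) (at t)"
    and "\<forall>t. (b1 has_real_derivative b2 t) (at t)"
    and "\<forall>t. b2 t \<le> U" "\<forall>t\<in>\<Theta>. L \<le> b2 t"
    and "0 < L" "L \<le> U" "0 < a"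
    and p0: "1 \<le> p0" "p0 \<le> r"
  shows "((2 * p0 \<le> r \<longrightarrow>
         Btilde1 p (sqrt (1/16 * (1/2) * (a / U) * inverse (phi_max n p X (2 * p0))
                          * ln (real p * exp 1 / real p0))) p0 \<subseteq> B_set n p X \<Theta> p0 \<longrightarrow>
         (INF \<theta>h\<in>estimators n. SUP \<beta>\<in>B_set n p X \<Theta> p0. risk n p X \<mu> a b b1 c \<theta>h \<beta>)
           \<ge> ennreal (1/552960 * (L / U) * tau n p X (2 * p0) * real p0 * ln (real p * exp 1 / real p0)))
     \<and> (r \<le> 2 * p0 \<longrightarrow>
         Btilde2 p (sqrt (ln 2 / 64 * (a / U) * inverse (phi_max n p X p0))) p0
           \<subseteq> B_set n p X \<Theta> p0 \<longrightarrow>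
         (INF \<theta>h\<in>estimators n. SUP \<beta>\<in>B_set n p X \<Theta> p0. risk n p X \<mu> a b b1 c \<theta>h \<beta>)
           \<ge> ennreal (1/552960 * (L / U) * tau n p X p0 * real r)))"
proof -
  interpret glm \<Theta> \<mu> a b b1 b2 c L U
    by unfold_locales (use assms in auto)
  have rp: "r \<le> p" using col_rank_le rdef by simp
  show ?thesis
  proof (intro conjI impI)
    assume h1: "2 * p0 \<le> r"
      and h2: "Btilde1 p (sqrt (1/16 * (1/2) * (a / U) * inverse (phi_max n p X (2 * p0))
                          * ln (real p * exp 1 / real p0))) p0 \<subseteq> B_set n p X \<Theta> p0"
    show "(INF \<theta>h\<in>estimators n. SUP \<beta>\<in>B_set n p X \<Theta> p0. risk n p X \<mu> a b b1 c \<theta>h \<beta>)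
           \<ge> ennreal (1/552960 * (L / U) * tau n p X (2 * p0) * real p0 * ln (real p * exp 1 / real p0))"
    proof (rule INF_greatest)
      fix \<theta>h assume est: "\<theta>h \<in> estimators n"
      show "ennreal (1/552960 * (L / U) * tau n p X (2 * p0) * real p0 * ln (real p * exp 1 / real p0))
          \<le> (SUP \<beta>\<in>B_set n p X \<Theta> p0. risk n p X \<mu> a b b1 c \<theta>h \<beta>)"
        by (rule case1[OF p0(1) _ h2 est]) (use h1 rp in linarith)
    qed
  next
    assume h1: "r \<le> 2 * p0"
      and h2: "Btilde2 p (sqrt (ln 2 / 64 * (a / U) * inverse (phi_max n p X p0))) p0
           \<subseteq> B_set n p X \<Theta> p0"
    show "(INF \<theta>h\<in>estimators n. SUP \<beta>\<in>B_set n p X \<Theta> p0. risk n p X \<mu> a b b1 c \<theta>h \<beta>)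
           \<ge> ennreal (1/552960 * (L / U) * tau n p X p0 * real r)"
    proof (rule INF_greatest)
      fix \<theta>h assume est: "\<theta>h \<in> estimators n"
      show "ennreal (1/552960 * (L / U) * tau n p X p0 * real r)
          \<le> (SUP \<beta>\<in>B_set n p X \<Theta> p0. risk n p X \<mu> a b b1 c \<theta>h \<beta>)"
        by (rule case2[OF p0(1) _ h1 h2 est]) (use p0 rp in linarith)
    qed
  qed
qed

theorem theorem2:
  shows "\<exists>ct C2::real. 0 < ct \<and> ct < 1 \<and> 0 < C2 \<and>
    (\<forall>(n::nat) (p::nat) (X::nat \<Rightarrow> nat \<Rightarrow> real) (r::nat) (\<Theta>::real set) (\<mu>::real measure)
       (a::real) (b::real \<Rightarrow> real) (b1::real \<Rightarrow> real) (b2::real \<Rightarrow> real)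
       (c::real \<Rightarrow> real \<Rightarrow> real) (L::real) (U::real) (p0::nat).
      r = col_rank n p X \<longrightarrow>
      (\<forall>J. J \<subseteq> {..<p} \<and> card J = r \<longrightarrow> cols_indep n X J) \<longrightarrow>
      sets \<mu> = sets borel \<longrightarrow>
      (\<lambda>y. c y a) \<in> borel_measurable borel \<longrightarrow>
      (\<forall>\<theta>. prob_space (density \<mu> (\<lambda>y. ennreal (glm_density a b c \<theta> y)))) \<longrightarrow>
      is_interval \<Theta> \<longrightarrow> closed \<Theta> \<longrightarrow>
      (\<forall>t. (b has_real_derivative b1 t) (at t)) \<longrightarrow>
      (\<forall>t. (b1 has_real_derivative b2 t) (at t)) \<longrightarrow>
      (\<forall>t. b2 t \<le> U) \<longrightarrow> (\<forall>t\<in>\<Theta>. L \<le> b2 t) \<longrightarrow>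
      0 < L \<longrightarrow> L \<le> U \<longrightarrow> 0 < a \<longrightarrow>
      1 \<le> p0 \<longrightarrow> p0 \<le> r \<longrightarrow>
      ((2 * p0 \<le> r \<longrightarrow>
         Btilde1 p (sqrt (1/16 * ct * (a / U) * inverse (phi_max n p X (2 * p0))
                          * ln (real p * exp 1 / real p0))) p0 \<subseteq> B_set n p X \<Theta> p0 \<longrightarrow>
         (INF \<theta>h\<in>estimators n. SUP \<beta>\<in>B_set n p X \<Theta> p0. risk n p X \<mu> a b b1 c \<theta>h \<beta>)
           \<ge> ennreal (C2 * (L / U) * tau n p X (2 * p0) * real p0 * ln (real p * exp 1 / real p0)))
     \<and> (r \<le> 2 * p0 \<longrightarrow>
         Btilde2 p (sqrt (ln 2 / 64 * (a / U) * inverse (phi_max n p X p0))) p0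
           \<subseteq> B_set n p X \<Theta> p0 \<longrightarrow>
         (INF \<theta>h\<in>estimators n. SUP \<beta>\<in>B_set n p X \<Theta> p0. risk n p X \<mu> a b b1 c \<theta>h \<beta>)
           \<ge> ennreal (C2 * (L / U) * tau n p X p0 * real r))))"
  apply (rule exI[of _ "1/2"], rule exI[of _ "1/552960"], intro conjI)
     apply simp
    apply simp
   apply simp
  apply (intro allI impI)
  apply (rule theorem2_main; assumption)
  done

end
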